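(* Let $H_A,K_A,H_B,K_B$ be Hilbert spaces. Regard $H_A\otimes H_B$ as a bipartite quantum system over $(\mathcal B(H_A),\mathcal B(H_B))$ via $a\cdot\xi=(a\otimes I_{H_B})\xi$ and $\xi\cdot b=(I_{H_A}\otimes b^{t})\xi$, and similarly regard $K_A\otimes K_B$ as a bipartite quantum system over $(\mathcal B(K_A),\mathcal B(K_B))$. Then every local isometry $V:H_A\otimes H_B\to K_A\otimes K_B$ (between these two systems) is split, i.e. there exist isometries $V_A:H_A\to K_A$ and $V_B:H_B\to K_B$ with $V=V_A\otimes V_B$.
   Context: For a von Neumann algebra $\mathcal B$, $\mathcal B^o$ denotes its opposite algebra (same vector space and involution, product $b_1^ob_2^o=(b_2b_1)^o$). For a Hilbert space $H_B$, fix an orthonormal basis and let $b^{t}$ denote the transpose of $b\in\mathcal B(H_B)$ with respect to it; $b^o\mapsto b^{t}$ is a normal *-isomorphism $\mathcal B(H_B)^o\to\mathcal B(H_B)$. A bipartite quantum system over a pair of von Neumann algebras $(\mathcal A,\mathcal B)$ is a Hilbert space $H$ with a unital *-representation $\pi_H:\mathcal A\otimes_{\max}\mathcal B^o\to\mathcal B(H)$ that is normal in each variable separately; write $\pi_H(a)=\pi_H(a\otimes 1)$, $\pi_H(b^o)=\pi_H(1\otimes b^o)$, $a\cdot\xi=\pi_H(a)\xi$, $\xi\cdot b=\pi_H(b^o)\xi$. Local operators: if $H$ is a system over $(\mathcal A_1,\mathcal B)$ and $K$ over $(\mathcal A_2,\mathcal B)$, an operator $T\in\mathcal B(H,K)$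 is $\mathcal A_1$-$\mathcal A_2$-local if $T(\xi\cdot b)=(T\xi)\cdot b$ for all $\xi\in H,b\in\mathcal B$ and $T\pi_H(\mathcal A_1)T^*\subseteq\pi_K(\mathcal A_2)$. If $H$ is a system over $(\mathcal A,\mathcal B_1)$ and $K$ over $(\mathcal A,\mathcal B_2)$, $T\in\mathcal B(H,K)$ is $\mathcal B_1$-$\mathcal B_2$-local if $T(a\cdot\xi)=a\cdot(T\xi)$ for all $a\in\mathcal A,\xi\in H$ and $T\pi_H(\mathcal B_1^o)T^*\subseteq\pi_K(\mathcal B_2^o)$. Local isometry: for systems $H$ over $(\mathcal A_1,\mathcal B_1)$ and $K$ over $(\mathcal A_2,\mathcal B_2)$, an operator $T:H\to K$ is a local isometry if there exist bipartite systems $L$ over $(\mathcal A_1,\mathcal B_2)$ and $\tilde L$ over $(\mathcal A_2,\mathcal B_1)$, $\mathcal A_1$-$\mathcal A_2$-local isometries $T_{1,1}:H\to\tilde L$, $T_{2,2}:L\to K$, and $\mathcal B_1$-$\mathcal B_2$-local isometries $T_{1,2}:H\to L$, $T_{2,1}:\tilde L\to K$, such that $T=T_{2,2}T_{1,2}=T_{2,1}T_{1,1}$. In this case one writes $H\le K$. *)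

theory Defs
  imports "HOL-Analysis.Analysis"
begin

text \<open>Hilbert spaces are modelled as l2(I) over an index type I (via a fixed orthonormal
basis).  Vectors are functions I => complex; bounded operators are functions between
vector spaces, normalised to send non-l2 arguments to 0.\<close>

definition l2 :: "('a \<Rightarrow> complex) set" where
  "l2 = {f. (\<lambda>x. (cmod (f x))\<^sup>2) summable_on UNIV}"

definition l2inner :: "('a \<Rightarrow> complex) \<Rightarrow> ('a \<Rightarrow> complex) \<Rightarrow> complex" where
  "l2inner f g = (\<Sum>\<^sub>\<infinity>x. cnj (f x) * g x)"

definition l2norm :: "('a \<Rightarrow> complex) \<Rightarrow> real" where
  "l2norm f = sqrt (\<Sum>\<^sub>\<infinity>x. (cmod (f x))\<^sup>2)"

definition ket :: "'a \<Rightarrow> ('a \<Rightarrow> complex)" where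
  "ket j = (\<lambda>x. if x = j then 1 else 0)"

definition bop :: "(('a \<Rightarrow> complex) \<Rightarrow> ('b \<Rightarrow> complex)) \<Rightarrow> bool" where
  "bop T \<longleftrightarrow> (\<forall>f\<in>l2. T f \<in> l2) \<and> (\<forall>f. f \<notin> l2 \<longrightarrow> T f = (\<lambda>_. 0))
     \<and> (\<forall>f\<in>l2. \<forall>g\<in>l2. \<forall>c. T (\<lambda>x. f x + c * g x) = (\<lambda>y. T f y + c * T g y))
     \<and> (\<exists>C. \<forall>f\<in>l2. l2norm (T f) \<le> C * l2norm f)"

definition idop :: "('a \<Rightarrow> complex) \<Rightarrow> ('a \<Rightarrow> complex)" where
  "idop f = (if f \<in> l2 then f else (\<lambda>_. 0))"

definition opadd :: "(('a \<Rightarrow> complex) \<Rightarrow> ('b \<Rightarrow> complex)) \<Rightarrow> (('a \<Rightarrow> complex) \<Rightarrow> ('b \<Rightarrow> complex))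
     \<Rightarrow> (('a \<Rightarrow> complex) \<Rightarrow> ('b \<Rightarrow> complex))" where
  "opadd S T = (\<lambda>f y. S f y + T f y)"

definition opscale :: "complex \<Rightarrow> (('a \<Rightarrow> complex) \<Rightarrow> ('b \<Rightarrow> complex)) \<Rightarrow> (('a \<Rightarrow> complex) \<Rightarrow> ('b \<Rightarrow> complex))" where
  "opscale c T = (\<lambda>f y. c * T f y)"

definition is_adj :: "(('a \<Rightarrow> complex) \<Rightarrow> ('b \<Rightarrow> complex)) \<Rightarrow> (('b \<Rightarrow> complex) \<Rightarrow> ('a \<Rightarrow> complex)) \<Rightarrow> bool" where
  "is_adj T S \<longleftrightarrow> bop S \<and> (\<forall>f\<in>l2. \<forall>g\<in>l2. l2inner g (T f) = l2inner (S g) f)"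

definition adj :: "(('a \<Rightarrow> complex) \<Rightarrow> ('b \<Rightarrow> complex)) \<Rightarrow> (('b \<Rightarrow> complex) \<Rightarrow> ('a \<Rightarrow> complex))" where
  "adj T = (THE S. is_adj T S)"

definition isometry :: "(('a \<Rightarrow> complex) \<Rightarrow> ('b \<Rightarrow> complex)) \<Rightarrow> bool" where
  "isometry T \<longleftrightarrow> bop T \<and> (\<forall>f\<in>l2. l2norm (T f) = l2norm f)"

definition transp :: "(('a \<Rightarrow> complex) \<Rightarrow> ('a \<Rightarrow> complex)) \<Rightarrow> (('a \<Rightarrow> complex) \<Rightarrow> ('a \<Rightarrow> complex))" where
  "transp b = (THE c. bop c \<and> (\<forall>i j. c (ket j) i = b (ket i) j))"

text \<open>a \<otimes> I and I \<otimes> b on l2('a \<times> 'b) = l2('a) \<otimes> l2('b).\<close>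
definition tensor_left :: "(('a \<Rightarrow> complex) \<Rightarrow> ('c \<Rightarrow> complex)) \<Rightarrow> (('a \<times> 'b \<Rightarrow> complex) \<Rightarrow> ('c \<times> 'b \<Rightarrow> complex))" where
  "tensor_left a \<xi> = (if \<xi> \<in> l2 then (\<lambda>(i, j). a (\<lambda>i'. \<xi> (i', j)) i) else (\<lambda>_. 0))"

definition tensor_right :: "(('b \<Rightarrow> complex) \<Rightarrow> ('d \<Rightarrow> complex)) \<Rightarrow> (('a \<times> 'b \<Rightarrow> complex) \<Rightarrow> ('a \<times> 'd \<Rightarrow> complex))" where
  "tensor_right b \<xi> = (if \<xi> \<in> l2 then (\<lambda>(i, j). b (\<lambda>j'. \<xi> (i, j')) j) else (\<lambda>_. 0))"

definition optensor :: "(('a \<Rightarrow> complex) \<Rightarrow> ('c \<Rightarrow> complex)) \<Rightarrow> (('b \<Rightarrow> complex) \<Rightarrow> ('d \<Rightarrow> complex))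
     \<Rightarrow> (('a \<times> 'b \<Rightarrow> complex) \<Rightarrow> ('c \<times> 'd \<Rightarrow> complex))" where
  "optensor A B = tensor_left A \<circ> tensor_right B"

definition stdA :: "(('a \<Rightarrow> complex) \<Rightarrow> ('a \<Rightarrow> complex)) \<Rightarrow> (('a \<times> 'b \<Rightarrow> complex) \<Rightarrow> ('a \<times> 'b \<Rightarrow> complex))" where
  "stdA a = tensor_left a"

definition stdB :: "(('b \<Rightarrow> complex) \<Rightarrow> ('b \<Rightarrow> complex)) \<Rightarrow> (('a \<times> 'b \<Rightarrow> complex) \<Rightarrow> ('a \<times> 'b \<Rightarrow> complex))" where
  "stdB b = tensor_right (transp b)"

definition pos_op :: "(('a \<Rightarrow> complex) \<Rightarrow> ('a \<Rightarrow> complex)) \<Rightarrow> bool" where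
  "pos_op a \<longleftrightarrow> bop a \<and> (\<forall>f\<in>l2. Im (l2inner f (a f)) = 0 \<and> 0 \<le> Re (l2inner f (a f)))"

definition op_le :: "(('a \<Rightarrow> complex) \<Rightarrow> ('a \<Rightarrow> complex)) \<Rightarrow> (('a \<Rightarrow> complex) \<Rightarrow> ('a \<Rightarrow> complex)) \<Rightarrow> bool" where
  "op_le a b \<longleftrightarrow> bop a \<and> bop b \<and> pos_op (opadd b (opscale (-1) a))"

definition op_lub :: "(('a \<Rightarrow> complex) \<Rightarrow> ('a \<Rightarrow> complex)) set \<Rightarrow> (('a \<Rightarrow> complex) \<Rightarrow> ('a \<Rightarrow> complex)) \<Rightarrow> bool" where
  "op_lub D s \<longleftrightarrow> (\<forall>d\<in>D. op_le d s) \<and> (\<forall>u. (\<forall>d\<in>D. op_le d u) \<longrightarrow> op_le s u)"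

definition op_directed :: "(('a \<Rightarrow> complex) \<Rightarrow> ('a \<Rightarrow> complex)) set \<Rightarrow> bool" where
  "op_directed D \<longleftrightarrow> D \<noteq> {} \<and> (\<forall>x\<in>D. \<forall>y\<in>D. \<exists>z\<in>D. op_le x z \<and> op_le y z)"

text \<open>Normal map: preserves suprema of bounded upward directed families (= increasing nets)
of positive operators.\<close>
definition normal_map :: "((('a \<Rightarrow> complex) \<Rightarrow> ('a \<Rightarrow> complex)) \<Rightarrow> (('l \<Rightarrow> complex) \<Rightarrow> ('l \<Rightarrow> complex))) \<Rightarrow> bool" where
  "normal_map \<phi> \<longleftrightarrow> (\<forall>D s. op_directed D \<and> (\<forall>d\<in>D. pos_op d) \<and> op_lub D s \<longrightarrow> op_lub (\<phi> ` D) (\<phi> s))"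

definition star_rep :: "((('a \<Rightarrow> complex) \<Rightarrow> ('a \<Rightarrow> complex)) \<Rightarrow> (('l \<Rightarrow> complex) \<Rightarrow> ('l \<Rightarrow> complex))) \<Rightarrow> bool" where
  "star_rep \<phi> \<longleftrightarrow> (\<forall>a. bop a \<longrightarrow> bop (\<phi> a))
     \<and> (\<forall>a b c. bop a \<longrightarrow> bop b \<longrightarrow> \<phi> (opadd a (opscale c b)) = opadd (\<phi> a) (opscale c (\<phi> b)))
     \<and> (\<forall>a b. bop a \<longrightarrow> bop b \<longrightarrow> \<phi> (a \<circ> b) = \<phi> a \<circ> \<phi> b)
     \<and> (\<forall>a. bop a \<longrightarrow> \<phi> (adj a) = adj (\<phi> a))
     \<and> \<phi> idop = idop"

text \<open>Unital *-representation of the opposite algebra B(l2('b))^o, written as b |-> pi(b^o):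
an anti-multiplicative map.\<close>
definition star_antirep :: "((('a \<Rightarrow> complex) \<Rightarrow> ('a \<Rightarrow> complex)) \<Rightarrow> (('l \<Rightarrow> complex) \<Rightarrow> ('l \<Rightarrow> complex))) \<Rightarrow> bool" where
  "star_antirep \<phi> \<longleftrightarrow> (\<forall>a. bop a \<longrightarrow> bop (\<phi> a))
     \<and> (\<forall>a b c. bop a \<longrightarrow> bop b \<longrightarrow> \<phi> (opadd a (opscale c b)) = opadd (\<phi> a) (opscale c (\<phi> b)))
     \<and> (\<forall>a b. bop a \<longrightarrow> bop b \<longrightarrow> \<phi> (a \<circ> b) = \<phi> b \<circ> \<phi> a)
     \<and> (\<forall>a. bop a \<longrightarrow> \<phi> (adj a) = adj (\<phi> a))
     \<and> \<phi> idop = idop"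

text \<open>Bipartite system over (B(l2('a)), B(l2('b))) on l2('l): a unital *-representation of
the max tensor product, i.e. a commuting pair (piA, piB) with piB(b) = pi(1 \<otimes> b^o),
normal in each variable.\<close>
definition bip_sys :: "((('a \<Rightarrow> complex) \<Rightarrow> ('a \<Rightarrow> complex)) \<Rightarrow> (('l \<Rightarrow> complex) \<Rightarrow> ('l \<Rightarrow> complex)))
     \<Rightarrow> ((('b \<Rightarrow> complex) \<Rightarrow> ('b \<Rightarrow> complex)) \<Rightarrow> (('l \<Rightarrow> complex) \<Rightarrow> ('l \<Rightarrow> complex))) \<Rightarrow> bool" where
  "bip_sys piA piB \<longleftrightarrow> star_rep piA \<and> star_antirep piB \<and> normal_map piA \<and> normal_map piB
     \<and> (\<forall>a b. bop a \<longrightarrow> bop b \<longrightarrow> piA a \<circ> piB b = piB b \<circ> piA a)"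

definition A_local :: "((('a1 \<Rightarrow> complex) \<Rightarrow> ('a1 \<Rightarrow> complex)) \<Rightarrow> (('h \<Rightarrow> complex) \<Rightarrow> ('h \<Rightarrow> complex)))
     \<Rightarrow> ((('b \<Rightarrow> complex) \<Rightarrow> ('b \<Rightarrow> complex)) \<Rightarrow> (('h \<Rightarrow> complex) \<Rightarrow> ('h \<Rightarrow> complex)))
     \<Rightarrow> ((('a2 \<Rightarrow> complex) \<Rightarrow> ('a2 \<Rightarrow> complex)) \<Rightarrow> (('k \<Rightarrow> complex) \<Rightarrow> ('k \<Rightarrow> complex)))
     \<Rightarrow> ((('b \<Rightarrow> complex) \<Rightarrow> ('b \<Rightarrow> complex)) \<Rightarrow> (('k \<Rightarrow> complex) \<Rightarrow> ('k \<Rightarrow> complex)))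
     \<Rightarrow> (('h \<Rightarrow> complex) \<Rightarrow> ('k \<Rightarrow> complex)) \<Rightarrow> bool" where
  "A_local piA1 piB piA2 piB' T \<longleftrightarrow> bop T
     \<and> (\<forall>b \<xi>. bop b \<longrightarrow> \<xi> \<in> l2 \<longrightarrow> T (piB b \<xi>) = piB' b (T \<xi>))
     \<and> (\<forall>a. bop a \<longrightarrow> (\<exists>a'. bop a' \<and> T \<circ> piA1 a \<circ> adj T = piA2 a'))"

definition B_local :: "((('a \<Rightarrow> complex) \<Rightarrow> ('a \<Rightarrow> complex)) \<Rightarrow> (('h \<Rightarrow> complex) \<Rightarrow> ('h \<Rightarrow> complex)))
     \<Rightarrow> ((('b1 \<Rightarrow> complex) \<Rightarrow> ('b1 \<Rightarrow> complex)) \<Rightarrow> (('h \<Rightarrow> complex) \<Rightarrow> ('h \<Rightarrow> complex)))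
     \<Rightarrow> ((('a \<Rightarrow> complex) \<Rightarrow> ('a \<Rightarrow> complex)) \<Rightarrow> (('k \<Rightarrow> complex) \<Rightarrow> ('k \<Rightarrow> complex)))
     \<Rightarrow> ((('b2 \<Rightarrow> complex) \<Rightarrow> ('b2 \<Rightarrow> complex)) \<Rightarrow> (('k \<Rightarrow> complex) \<Rightarrow> ('k \<Rightarrow> complex)))
     \<Rightarrow> (('h \<Rightarrow> complex) \<Rightarrow> ('k \<Rightarrow> complex)) \<Rightarrow> bool" where
  "B_local piA piB1 piA' piB2 T \<longleftrightarrow> bop T
     \<and> (\<forall>a \<xi>. bop a \<longrightarrow> \<xi> \<in> l2 \<longrightarrow> T (piA a \<xi>) = piA' a (T \<xi>))
     \<and> (\<forall>b. bop b \<longrightarrow> (\<exists>b'. bop b' \<and> T \<circ> piB1 b \<circ> adj T = piB2 b'))"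

end

theory Submission
  imports Defs
begin


lemma sq_ineq: "(a+b)^2 \<le> 2*a^2 + 2*(b::real)^2"
proof -
  have "0 \<le> (a-b)^2" by simp
  thus ?thesis by (simp add: power2_diff power2_sum)
qed

lemma prod_ineq: "a * b \<le> (1/2) * (a^2 + (b::real)^2)"
proof -
  have "0 \<le> (a-b)^2" by simp
  thus ?thesis by (simp add: power2_diff)
qed

lemma fin_supp_summable:
  fixes f :: "'a \<Rightarrow> 'b::{comm_monoid_add, topological_space}"
  assumes "finite F" "\<And>x. x \<notin> F \<Longrightarrow> f x = 0"
  shows "f summable_on A"
proof -
  have "f summable_on (A \<inter> F)" using assms by simp
  then show ?thesis
    by (rule summable_on_cong_neutral[THEN iffD1, rotated -1]) (use assms in auto)
qed

lemma fin_supp_infsum: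
  fixes f :: "'a \<Rightarrow> 'b::{comm_monoid_add, t2_space}"
  assumes "finite F" "\<And>x. x \<notin> F \<Longrightarrow> f x = 0"
  shows "infsum f UNIV = sum f F"
proof -
  have "infsum f UNIV = infsum f F"
    by (rule infsum_cong_neutral) (use assms in auto)
  then show ?thesis using assms by simp
qed

lemma l2_iff: "f \<in> l2 \<longleftrightarrow> (\<lambda>x. (cmod (f x))\<^sup>2) summable_on UNIV"
  by (simp add: l2_def)

lemma zero_l2[simp]: "(\<lambda>_. 0) \<in> l2"
  by (simp add: l2_def)

lemma l2_lin:
  assumes "f \<in> l2" "g \<in> l2"
  shows "(\<lambda>x. f x + c * g x) \<in> l2"
proof -
  have s: "(\<lambda>x. 2 * (cmod (f x))\<^sup>2 + 2 * ((cmod c)\<^sup>2 * (cmod (g x))\<^sup>2)) summable_on UNIV"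
    using assms by (intro summable_on_add summable_on_cmult_right) (auto simp: l2_def)
  have "(cmod (f x + c * g x))\<^sup>2 \<le> 2 * (cmod (f x))\<^sup>2 + 2 * ((cmod c)\<^sup>2 * (cmod (g x))\<^sup>2)" for x
  proof -
    have "cmod (f x + c * g x) \<le> cmod (f x) + cmod c * cmod (g x)"
      by (metis norm_mult norm_triangle_ineq)
    hence "(cmod (f x + c * g x))\<^sup>2 \<le> (cmod (f x) + cmod c * cmod (g x))\<^sup>2"
      by (simp add: power_mono)
    also have "\<dots> \<le> 2 * (cmod (f x))\<^sup>2 + 2 * (cmod c * cmod (g x))\<^sup>2"
      by (rule sq_ineq)
    finally show ?thesis by (simp add: power_mult_distrib)
  qed
  then show ?thesis unfolding l2_def
    by (auto intro!: summable_on_comparison_test[OF s])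
qed

lemma l2_scale: "g \<in> l2 \<Longrightarrow> (\<lambda>x. c * g x) \<in> l2"
  using l2_lin[of "\<lambda>_. 0" g c] by simp

lemma l2_add: "f \<in> l2 \<Longrightarrow> g \<in> l2 \<Longrightarrow> (\<lambda>x. f x + g x) \<in> l2"
  using l2_lin[of f g 1] by simp

lemma l2_diff: "f \<in> l2 \<Longrightarrow> g \<in> l2 \<Longrightarrow> (\<lambda>x. f x - g x) \<in> l2"
  using l2_lin[of f g "-1"] by simp

lemma l2_fin_supp: "finite F \<Longrightarrow> (\<And>x. x \<notin> F \<Longrightarrow> f x = 0) \<Longrightarrow> f \<in> l2"
  unfolding l2_def by (auto intro!: fin_supp_summable)

lemma l2_ket[simp]: "ket j \<in> l2"
  by (rule l2_fin_supp[of "{j}"]) (auto simp: ket_def)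

definition cnjop :: "('a \<Rightarrow> complex) \<Rightarrow> ('a \<Rightarrow> complex)" where
  "cnjop f = (\<lambda>x. cnj (f x))"

lemma cnjop_cnjop[simp]: "cnjop (cnjop f) = f"
  by (simp add: cnjop_def)

lemma l2_cnjop[simp]: "cnjop f \<in> l2 \<longleftrightarrow> f \<in> l2"
  by (simp add: cnjop_def l2_def)

subsection \<open>Inner product\<close>

lemma inner_abs_summable:
  assumes "f \<in> l2" "g \<in> l2"
  shows "(\<lambda>x. cmod (f x) * cmod (g x)) summable_on UNIV"
proof -
  have s: "(\<lambda>x. (1/2) * ((cmod (f x))\<^sup>2 + (cmod (g x))\<^sup>2)) summable_on UNIV"
    using assms unfolding l2_def
    by (intro summable_on_cmult_right summable_on_add) auto
  show ?thesis
    by (rule summable_on_comparison_test[OF s]) (use prod_ineq in blast, simp)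
qed

lemma inner_summable:
  assumes "f \<in> l2" "g \<in> l2"
  shows "(\<lambda>x. cnj (f x) * g x) summable_on UNIV"
  using inner_abs_summable[OF assms]
  by (simp add: summable_on_iff_abs_summable_on_complex norm_mult)

lemma l2inner_lin2:
  assumes "f \<in> l2" "g \<in> l2" "h \<in> l2"
  shows "l2inner f (\<lambda>x. g x + c * h x) = l2inner f g + c * l2inner f h"
proof -
  have "l2inner f (\<lambda>x. g x + c * h x) = (\<Sum>\<^sub>\<infinity>x. cnj (f x) * g x + c * (cnj (f x) * h x))"
    unfolding l2inner_def by (simp add: algebra_simps)
  also have "\<dots> = l2inner f g + c * l2inner f h"
    unfolding l2inner_def using inner_summable[OF assms(1,2)] inner_summable[OF assms(1,3)]
    by (subst infsum_add) (auto intro: summable_on_cmult_right simp: infsum_cmult_right')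
  finally show ?thesis .
qed

lemma l2inner_cnj: "l2inner g f = cnj (l2inner f g)"
  unfolding l2inner_def by (simp flip: infsum_cnj add: mult.commute)

lemma l2inner_lin1:
  assumes "f \<in> l2" "g \<in> l2" "h \<in> l2"
  shows "l2inner (\<lambda>x. g x + c * h x) f = l2inner g f + cnj c * l2inner h f"
  using l2inner_lin2[OF assms, of c] by (subst (1 2 3) l2inner_cnj) simp

lemma l2inner_ket_left: "l2inner (ket j) g = g j"
proof -
  have "l2inner (ket j) g = sum (\<lambda>x. cnj (ket j x) * g x) {j}"
    unfolding l2inner_def by (rule fin_supp_infsum) (auto simp: ket_def)
  then show ?thesis by (simp add: ket_def)
qed

lemma l2inner_ket_right: "l2inner g (ket j) = cnj (g j)"
  by (subst l2inner_cnj) (simp add: l2inner_ket_left)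

definition nsq :: "('a \<Rightarrow> complex) \<Rightarrow> real" where
  "nsq f = (\<Sum>\<^sub>\<infinity>x. (cmod (f x))\<^sup>2)"

lemma nsq_nonneg: "0 \<le> nsq f"
  unfolding nsq_def by (metis (no_types, lifting) infsum_nonneg zero_le_power2)

lemma l2norm_nsq: "l2norm f = sqrt (nsq f)"
  by (simp add: l2norm_def nsq_def)

lemma l2norm_nonneg: "0 \<le> l2norm f"
  by (simp add: l2norm_nsq nsq_nonneg)

lemma l2norm_sq: "(l2norm f)\<^sup>2 = nsq f"
  by (simp add: l2norm_nsq nsq_nonneg)

lemma l2inner_self: assumes "f \<in> l2" shows "l2inner f f = complex_of_real (nsq f)"
proof -
  have "l2inner f f = (\<Sum>\<^sub>\<infinity>x. complex_of_real ((cmod (f x))\<^sup>2))"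
    unfolding l2inner_def by (rule infsum_cong) (metis complex_norm_square mult.commute of_real_power)
  also have "\<dots> = complex_of_real (nsq f)"
    unfolding nsq_def using assms unfolding l2_def
    by (intro infsumI has_sum_of_real has_sum_infsum) auto
  finally show ?thesis .
qed



lemma t_ineq: fixes t :: real assumes "t > 0" shows "a * b \<le> (1/2) * (t * a^2 + (1/t) * b^2)"
proof -
  have "0 \<le> (t*a - b)^2 / t" using assms by simp
  also have "(t*a - b)^2 / t = t * a^2 - 2*a*b + b^2/t"
    using assms by (simp add: power2_diff field_simps power2_eq_square)
  finally show ?thesis by (simp add: field_simps)
qed

lemma nsq_zeroD:
  assumes "f \<in> l2" "nsq f = 0" shows "f x = 0"
proof -
  have "(\<lambda>x. (cmod (f x))\<^sup>2) x = 0"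
    by (rule nonneg_infsum_le_0D[of _ UNIV]) (use assms in \<open>auto simp: nsq_def l2_def\<close>)
  then show ?thesis by simp
qed

lemma l2norm_zeroD: "f \<in> l2 \<Longrightarrow> l2norm f = 0 \<Longrightarrow> f x = 0"
  using nsq_zeroD l2norm_sq by (metis power_zero_numeral)

lemma cauchy_schwarz:
  assumes f: "f \<in> l2" and g: "g \<in> l2"
  shows "cmod (l2inner f g) \<le> l2norm f * l2norm g"
proof -
  define S where "S = (\<Sum>\<^sub>\<infinity>x. cmod (f x) * cmod (g x))"
  have sm: "(\<lambda>x. cmod (f x) * cmod (g x)) summable_on UNIV"
    by (rule inner_abs_summable[OF f g])
  have "cmod (l2inner f g) \<le> S"
    unfolding l2inner_def S_def
    using norm_infsum_bound[of "\<lambda>x. cnj (f x) * g x" UNIV] sm by (simp add: norm_mult)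
  moreover have "S \<le> l2norm f * l2norm g"
  proof (cases "nsq f = 0 \<or> nsq g = 0")
    case True
    have "\<And>x. cmod (f x) * cmod (g x) = 0"
    proof -
      fix x
      from True have "f x = 0 \<or> g x = 0" using nsq_zeroD[OF f] nsq_zeroD[OF g] by blast
      then show "cmod (f x) * cmod (g x) = 0" by auto
    qed
    then have "(\<lambda>x. cmod (f x) * cmod (g x)) = (\<lambda>_. 0)" by (intro ext)
    then have "S = 0" unfolding S_def by simp
    then show ?thesis by (simp add: l2norm_nonneg)
  next
    case False
    define A where "A = nsq f"
    define B where "B = nsq g"
    have A: "A > 0" and B: "B > 0" using False nsq_nonneg A_def B_def by (metis order_le_less)+
    define t where "t = sqrt (B / A)"
    have t: "t > 0" using A B t_def by simp
    have "S \<le> (\<Sum>\<^sub>\<infinity>x. (1/2) * (t * (cmod (f x))^2 + (1/t) * (cmod (g x))^2))"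
      unfolding S_def
    proof (rule infsum_mono[OF sm])
      show "(\<lambda>x. (1/2) * (t * (cmod (f x))^2 + (1/t) * (cmod (g x))^2)) summable_on UNIV"
        using f g unfolding l2_def
        by (intro summable_on_cmult_right summable_on_add) auto
      show "\<And>x. x \<in> UNIV \<Longrightarrow> cmod (f x) * cmod (g x) \<le> (1/2) * (t * (cmod (f x))^2 + (1/t) * (cmod (g x))^2)"
        using t_ineq[OF t] by blast
    qed
    also have "\<dots> = (1/2) * (t * A + (1/t) * B)"
    proof -
      have sf: "(\<lambda>x. (cmod (f x))^2) summable_on UNIV" and sg: "(\<lambda>x. (cmod (g x))^2) summable_on UNIV"
        using f g unfolding l2_def by auto
      have "(\<Sum>\<^sub>\<infinity>x. t * (cmod (f x))^2 + (1/t) * (cmod (g x))^2) = (\<Sum>\<^sub>\<infinity>x. t * (cmod (f x))^2) + (\<Sum>\<^sub>\<infinity>x. (1/t) * (cmod (g x))^2)"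
        by (rule infsum_add) (intro summable_on_cmult_right sf sg)+
      then show ?thesis unfolding A_def B_def nsq_def by (simp only: infsum_cmult_right')
    qed
    also have "\<dots> = sqrt A * sqrt B"
      using A B unfolding t_def by (simp add: field_simps real_sqrt_divide)
    also have "\<dots> = l2norm f * l2norm g" by (simp add: l2norm_nsq A_def B_def)
    finally show ?thesis .
  qed
  ultimately show ?thesis by linarith
qed

lemma nsq_scale: "nsq (\<lambda>x. c * f x) = (cmod c)\<^sup>2 * nsq f"
  unfolding nsq_def by (simp add: norm_mult power_mult_distrib infsum_cmult_right')

lemma l2norm_scale: "l2norm (\<lambda>x. c * f x) = cmod c * l2norm f"
  by (simp add: l2norm_nsq nsq_scale real_sqrt_mult)

lemma nsq_ket: "nsq (ket j) = 1"
proof -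
  have "nsq (ket j) = sum (\<lambda>x. (cmod (ket j x))\<^sup>2) {j}"
    unfolding nsq_def by (rule fin_supp_infsum) (auto simp: ket_def)
  then show ?thesis by (simp add: ket_def)
qed

lemma l2norm_ket[simp]: "l2norm (ket j) = 1"
  by (simp add: l2norm_nsq nsq_ket)

subsection \<open>Bounded operators\<close>

lemma bop_l2: "bop T \<Longrightarrow> f \<in> l2 \<Longrightarrow> T f \<in> l2"
  by (simp add: bop_def)

lemma bop_nonl2: "bop T \<Longrightarrow> f \<notin> l2 \<Longrightarrow> T f = (\<lambda>_. 0)"
  by (simp add: bop_def)

lemma bop_out: "bop T \<Longrightarrow> T f \<in> l2"
  by (cases "f \<in> l2") (auto simp: bop_def)

lemma bop_lin: "bop T \<Longrightarrow> f \<in> l2 \<Longrightarrow> g \<in> l2 \<Longrightarrow> T (\<lambda>x. f x + c * g x) = (\<lambda>y. T f y + c * T g y)"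
  by (simp add: bop_def)

lemma bop_zero: "bop T \<Longrightarrow> T (\<lambda>_. 0) = (\<lambda>_. 0)"
  using bop_lin[of T "\<lambda>_. 0" "\<lambda>_. 0" 1] by (auto simp: fun_eq_iff)

lemma bop_scale: "bop T \<Longrightarrow> g \<in> l2 \<Longrightarrow> T (\<lambda>x. c * g x) = (\<lambda>y. c * T g y)"
  using bop_lin[of T "\<lambda>_. 0" g c] by (simp add: bop_zero)

lemma bop_add: "bop T \<Longrightarrow> f \<in> l2 \<Longrightarrow> g \<in> l2 \<Longrightarrow> T (\<lambda>x. f x + g x) = (\<lambda>y. T f y + T g y)"
  using bop_lin[of T f g 1] by simp

lemma bop_diff: "bop T \<Longrightarrow> f \<in> l2 \<Longrightarrow> g \<in> l2 \<Longrightarrow> T (\<lambda>x. f x - g x) = (\<lambda>y. T f y - T g y)"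
  using bop_lin[of T f g "-1"] by simp

lemma bop_bound:
  fixes T :: "('a \<Rightarrow> complex) \<Rightarrow> ('b \<Rightarrow> complex)"
  shows "bop T \<Longrightarrow> \<exists>C\<ge>0. \<forall>f\<in>l2. l2norm (T f) \<le> C * l2norm f"
proof -
  assume "bop T"
  then obtain C where C: "\<forall>f\<in>l2. l2norm (T f) \<le> C * l2norm f" by (auto simp: bop_def)
  show ?thesis
  proof (intro exI[of _ "max C 0"] conjI ballI)
    fix f :: "'a \<Rightarrow> complex" assume "f \<in> l2"
    then have "l2norm (T f) \<le> C * l2norm f" using C by auto
    also have "\<dots> \<le> max C 0 * l2norm f" by (simp add: l2norm_nonneg mult_right_mono)
    finally show "l2norm (T f) \<le> max C 0 * l2norm f" .
  qed simp
qed

lemma bopI: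
  assumes "\<And>f. f \<in> l2 \<Longrightarrow> T f \<in> l2" "\<And>f. f \<notin> l2 \<Longrightarrow> T f = (\<lambda>_. 0)"
    "\<And>f g c. f \<in> l2 \<Longrightarrow> g \<in> l2 \<Longrightarrow> T (\<lambda>x. f x + c * g x) = (\<lambda>y. T f y + c * T g y)"
    "\<And>f. f \<in> l2 \<Longrightarrow> l2norm (T f) \<le> C * l2norm f"
  shows "bop T"
  using assms unfolding bop_def by blast

lemma bop_comp:
  fixes S :: "('a \<Rightarrow> complex) \<Rightarrow> ('b \<Rightarrow> complex)" and T :: "('b \<Rightarrow> complex) \<Rightarrow> ('c \<Rightarrow> complex)"
  assumes S: "bop S" and T: "bop T" shows "bop (T \<circ> S)"
proof -
  obtain C1 where C1: "C1 \<ge> 0" "\<forall>f\<in>l2. l2norm (S f) \<le> C1 * l2norm f" using bop_bound[OF S] by auto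
  obtain C2 where C2: "C2 \<ge> 0" "\<forall>f\<in>l2. l2norm (T f) \<le> C2 * l2norm f" using bop_bound[OF T] by auto
  show ?thesis
  proof (rule bopI[where C = "C2 * C1"])
    fix f :: "'a \<Rightarrow> complex" assume f: "f \<in> l2"
    then show "(T \<circ> S) f \<in> l2" using S T by (simp add: bop_l2)
    have "l2norm (T (S f)) \<le> C2 * l2norm (S f)" using C2 bop_l2[OF S f] by auto
    also have "\<dots> \<le> C2 * (C1 * l2norm f)" using C1 f C2(1) by (simp add: mult_left_mono)
    finally show "l2norm ((T \<circ> S) f) \<le> C2 * C1 * l2norm f" by simp
  next
    fix f :: "'a \<Rightarrow> complex" assume "f \<notin> l2" then show "(T \<circ> S) f = (\<lambda>_. 0)" using S T by (simp add: bop_nonl2 bop_zero)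
  next
    fix f g :: "'a \<Rightarrow> complex" and c assume "f \<in> l2" "g \<in> l2"
    then show "(T \<circ> S) (\<lambda>x. f x + c * g x) = (\<lambda>y. (T \<circ> S) f y + c * (T \<circ> S) g y)"
      using S T by (simp add: bop_lin bop_l2)
  qed
qed

definition restr :: "'a set \<Rightarrow> ('a \<Rightarrow> complex) \<Rightarrow> ('a \<Rightarrow> complex)" where
  "restr F f = (\<lambda>y. if y \<in> F then f y else 0)"

lemma restr_l2: "finite F \<Longrightarrow> restr F f \<in> l2"
  by (rule l2_fin_supp[of F]) (auto simp: restr_def)

lemma restr_insert: "a \<notin> F \<Longrightarrow> restr (insert a F) f = (\<lambda>y. restr F f y + f a * ket a y)"
  by (auto simp: restr_def ket_def fun_eq_iff)

lemma bop_restr: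
  assumes "bop T" "finite F"
  shows "T (restr F f) = (\<lambda>z. \<Sum>x\<in>F. f x * T (ket x) z)"
  using assms(2)
proof (induction F rule: finite_induct)
  case empty
  then show ?case using assms(1) by (simp add: restr_def bop_zero)
next
  case (insert a F)
  then show ?case using assms(1) by (simp add: restr_insert bop_lin restr_l2 add.commute)
qed

lemma l2inner_restr:
  assumes "g \<in> l2" "finite F" and that: "\<And>x. v x \<in> l2"
  shows "l2inner g (\<lambda>z. \<Sum>x\<in>F. c x * v x z) = (\<Sum>x\<in>F. c x * l2inner g (v x))"
    and "(\<lambda>z. \<Sum>x\<in>F. c x * v x z) \<in> l2"
  using assms(2)
proof (induction F rule: finite_induct)
  case empty
  { case 1 show ?case by (simp add: l2inner_def) }
  { case 2 show ?case by simp }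
next
  case (insert a F)
  { case 1
    have "l2inner g (\<lambda>z. \<Sum>x\<in>insert a F. c x * v x z) = l2inner g (\<lambda>z. (\<Sum>x\<in>F. c x * v x z) + c a * v a z)"
      using insert by (simp add: add.commute)
    also have "\<dots> = (\<Sum>x\<in>F. c x * l2inner g (v x)) + c a * l2inner g (v a)"
      using insert that assms(1) by (simp add: l2inner_lin2)
    finally show ?case using insert by (simp add: add.commute) }
  { case 2 show ?case using l2_lin[OF insert(4) that[of a], of "c a"] insert by (simp add: add.commute) }
qed



definition adjf :: "(('a \<Rightarrow> complex) \<Rightarrow> ('b \<Rightarrow> complex)) \<Rightarrow> (('b \<Rightarrow> complex) \<Rightarrow> ('a \<Rightarrow> complex))" where
  "adjf T g = (if g \<in> l2 then (\<lambda>x. cnj (l2inner g (T (ket x)))) else (\<lambda>_. 0))"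

lemma cnj_mult_self: "cnj z * z = complex_of_real ((cmod z)\<^sup>2)"
  by (metis complex_norm_square mult.commute of_real_power)

lemma sqrt_bound: assumes "s \<le> K * sqrt s" "0 \<le> s" "0 \<le> (K::real)" shows "s \<le> K^2"
proof (cases "s = 0")
  case True then show ?thesis by simp
next
  case False
  then have "sqrt s > 0" using assms by simp
  have "sqrt s * sqrt s \<le> K * sqrt s" using assms by simp
  then have "sqrt s \<le> K" using \<open>sqrt s > 0\<close> by (rule mult_right_le_imp_le)
  then have "(sqrt s)^2 \<le> K^2" using assms by (intro power_mono) auto
  then show ?thesis using assms by simp
qed

lemma adjf_partial:
  fixes T :: "('a \<Rightarrow> complex) \<Rightarrow> ('b \<Rightarrow> complex)"
  assumes T: "bop T" and C: "C \<ge> 0" "\<forall>f\<in>l2. l2norm (T f) \<le> C * l2norm f"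
    and g: "g \<in> l2" and F: "finite F"
  shows "(\<Sum>x\<in>F. (cmod (adjf T g x))\<^sup>2) \<le> (C * l2norm g)\<^sup>2"
proof -
  define S where "S = adjf T g"
  define s where "s = (\<Sum>x\<in>F. (cmod (S x))\<^sup>2)"
  define h where "h = restr F S"
  have h: "h \<in> l2" unfolding h_def using F by (rule restr_l2)
  have Th: "T h = (\<lambda>z. \<Sum>x\<in>F. S x * T (ket x) z)"
    unfolding h_def using T F by (rule bop_restr)
  have "l2inner g (T h) = (\<Sum>x\<in>F. S x * l2inner g (T (ket x)))"
    unfolding Th using g F by (rule l2inner_restr) (simp add: T bop_l2)
  also have "\<dots> = (\<Sum>x\<in>F. complex_of_real ((cmod (S x))\<^sup>2))"
    using g by (intro sum.cong) (auto simp: S_def adjf_def cnj_mult_self)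
  also have "\<dots> = complex_of_real s" by (simp add: s_def)
  finally have eq: "l2inner g (T h) = complex_of_real s" .
  have nh: "nsq h = s"
    unfolding nsq_def s_def h_def restr_def
    by (subst fin_supp_infsum[of F]) (use F in auto)
  have s0: "0 \<le> s" unfolding s_def by (simp add: sum_nonneg)
  have "s = cmod (l2inner g (T h))" unfolding eq norm_of_real using s0 by simp
  also have "\<dots> \<le> l2norm g * l2norm (T h)"
    by (rule cauchy_schwarz[OF g bop_l2[OF T h]])
  also have "\<dots> \<le> l2norm g * (C * l2norm h)"
    using C h by (simp add: l2norm_nonneg mult_left_mono)
  also have "\<dots> = (C * l2norm g) * sqrt s" by (simp add: l2norm_nsq nh)
  finally have "s \<le> (C * l2norm g) * sqrt s" .
  then have "s \<le> (C * l2norm g)^2"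
    by (rule sqrt_bound) (use s0 C(1) l2norm_nonneg[of g] in auto)
  then show ?thesis by (simp add: s_def S_def)
qed

lemma adjf_l2:
  fixes T :: "('a \<Rightarrow> complex) \<Rightarrow> ('b \<Rightarrow> complex)"
  assumes T: "bop T" and C: "C \<ge> 0" "\<forall>f\<in>l2. l2norm (T f) \<le> C * l2norm f"
    and g: "g \<in> l2"
  shows "adjf T g \<in> l2" and "l2norm (adjf T g) \<le> C * l2norm g"
proof -
  have bdd: "bdd_above (sum (\<lambda>x. (cmod (adjf T g x))\<^sup>2) ` {F. F \<subseteq> UNIV \<and> finite F})"
    using adjf_partial[OF T C g] by (auto intro!: bdd_aboveI)
  have sm: "(\<lambda>x. (cmod (adjf T g x))\<^sup>2) summable_on UNIV"
    by (rule nonneg_bdd_above_summable_on[OF _ bdd]) simp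
  then show "adjf T g \<in> l2" by (simp add: l2_def)
  have "nsq (adjf T g) \<le> (C * l2norm g)\<^sup>2"
    unfolding nsq_def by (rule infsum_le_finite_sums[OF sm]) (rule adjf_partial[OF T C g])
  then have "sqrt (nsq (adjf T g)) \<le> sqrt ((C * l2norm g)\<^sup>2)" by (rule real_sqrt_le_mono)
  moreover have "sqrt ((C * l2norm g)\<^sup>2) = C * l2norm g" using C(1) l2norm_nonneg[of g] by simp
  ultimately show "l2norm (adjf T g) \<le> C * l2norm g"
    by (simp add: l2norm_nsq)
qed

lemma adjf_bop:
  fixes T :: "('a \<Rightarrow> complex) \<Rightarrow> ('b \<Rightarrow> complex)"
  assumes T: "bop T"
  shows "bop (adjf T)"
proof -
  obtain C where C: "C \<ge> 0" "\<forall>f\<in>l2. l2norm (T f) \<le> C * l2norm f" using bop_bound[OF T] by auto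
  show ?thesis
  proof (rule bopI[where C = C])
    fix g :: "'b \<Rightarrow> complex" assume "g \<in> l2"
    then show "adjf T g \<in> l2" "l2norm (adjf T g) \<le> C * l2norm g" using adjf_l2[OF T C] by auto
  next
    fix g :: "'b \<Rightarrow> complex" assume "g \<notin> l2" then show "adjf T g = (\<lambda>_. 0)" by (simp add: adjf_def)
  next
    fix f g :: "'b \<Rightarrow> complex" and c assume "f \<in> l2" "g \<in> l2"
    then show "adjf T (\<lambda>x. f x + c * g x) = (\<lambda>y. adjf T f y + c * adjf T g y)"
      using T by (simp add: adjf_def l2_lin l2inner_lin1 bop_l2)
  qed
qed

lemma l2_tail:
  assumes f: "f \<in> l2" and F: "finite F"
  shows "nsq (\<lambda>y. f y - restr F f y) = nsq f - (\<Sum>x\<in>F. (cmod (f x))\<^sup>2)"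
proof -
  have sm: "(\<lambda>x. (cmod (f x))\<^sup>2) summable_on UNIV" using f by (simp add: l2_def)
  have s1: "(\<lambda>y. if y \<in> F then (cmod (f y))\<^sup>2 else 0) summable_on UNIV"
    by (rule fin_supp_summable[OF F]) auto
  have s2: "(\<lambda>y. if y \<in> F then 0 else (cmod (f y))\<^sup>2) summable_on UNIV"
    by (rule summable_on_comparison_test[OF sm]) auto
  have "nsq f = (\<Sum>\<^sub>\<infinity>y. (if y \<in> F then (cmod (f y))\<^sup>2 else 0) + (if y \<in> F then 0 else (cmod (f y))\<^sup>2))"
    unfolding nsq_def by (rule infsum_cong) auto
  also have "\<dots> = (\<Sum>\<^sub>\<infinity>y. if y \<in> F then (cmod (f y))\<^sup>2 else 0) + (\<Sum>\<^sub>\<infinity>y. if y \<in> F then 0 else (cmod (f y))\<^sup>2)"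
    by (rule infsum_add[OF s1 s2])
  also have "(\<Sum>\<^sub>\<infinity>y. if y \<in> F then (cmod (f y))\<^sup>2 else 0) = (\<Sum>x\<in>F. (cmod (f x))\<^sup>2)"
    by (subst fin_supp_infsum[OF F]) auto
  also have "(\<Sum>\<^sub>\<infinity>y. if y \<in> F then 0 else (cmod (f y))\<^sup>2) = nsq (\<lambda>y. f y - restr F f y)"
    unfolding nsq_def restr_def by (rule infsum_cong) auto
  finally show ?thesis by simp
qed

lemma adjf_has_sum:
  fixes T :: "('a \<Rightarrow> complex) \<Rightarrow> ('b \<Rightarrow> complex)"
  assumes T: "bop T" and f: "f \<in> l2" and g: "g \<in> l2"
  shows "((\<lambda>x. cnj (adjf T g x) * f x) has_sum l2inner g (T f)) UNIV"
proof -
  obtain C where C: "C \<ge> 0" "\<forall>f\<in>l2. l2norm (T f) \<le> C * l2norm f" using bop_bound[OF T] by auto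
  define K where "K = l2norm g * C"
  have K: "K \<ge> 0" using C by (simp add: K_def l2norm_nonneg)
  have psum: "sum (\<lambda>x. cnj (adjf T g x) * f x) F = l2inner g (T (restr F f))" if F: "finite F" for F
  proof -
    have "l2inner g (T (restr F f)) = l2inner g (\<lambda>z. \<Sum>x\<in>F. f x * T (ket x) z)"
      using T F by (simp add: bop_restr)
    also have "\<dots> = (\<Sum>x\<in>F. f x * l2inner g (T (ket x)))"
      using g F by (rule l2inner_restr) (simp add: T bop_l2)
    finally show ?thesis using g by (simp add: adjf_def mult.commute)
  qed
  define N where "N = nsq f"
  have sm: "(\<lambda>x. (cmod (f x))\<^sup>2) summable_on UNIV" using f by (simp add: l2_def)
  have lim1: "((\<lambda>F. \<Sum>x\<in>F. (cmod (f x))\<^sup>2) \<longlongrightarrow> N) (finite_subsets_at_top UNIV)"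
    using sm unfolding N_def nsq_def by (simp add: summable_iff_has_sum_infsum has_sum_def)
  have lim2: "((\<lambda>F. K * sqrt (N - (\<Sum>x\<in>F. (cmod (f x))\<^sup>2))) \<longlongrightarrow> K * sqrt (N - N)) (finite_subsets_at_top UNIV)"
    by (intro tendsto_intros lim1)
  have bound: "norm (l2inner g (T f) - l2inner g (T (restr F f))) \<le> K * sqrt (N - (\<Sum>x\<in>F. (cmod (f x))\<^sup>2))"
    if F: "finite F" for F
  proof -
    have r: "restr F f \<in> l2" using F by (rule restr_l2)
    have d: "(\<lambda>y. f y - restr F f y) \<in> l2" using f r by (rule l2_diff)
    have "l2inner g (T f) - l2inner g (T (restr F f)) = l2inner g (T (\<lambda>y. f y - restr F f y))"
      using T f r g by (simp add: bop_diff l2inner_lin2[of g _ _ "-1", simplified] bop_l2)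
    then have "norm (l2inner g (T f) - l2inner g (T (restr F f))) \<le> l2norm g * l2norm (T (\<lambda>y. f y - restr F f y))"
      using cauchy_schwarz[OF g bop_l2[OF T d]] by simp
    also have "\<dots> \<le> l2norm g * (C * l2norm (\<lambda>y. f y - restr F f y))"
      using C d by (simp add: l2norm_nonneg mult_left_mono)
    also have "\<dots> = K * sqrt (N - (\<Sum>x\<in>F. (cmod (f x))\<^sup>2))"
      by (simp add: K_def l2norm_nsq l2_tail[OF f F] N_def)
    finally show ?thesis .
  qed
  have "((\<lambda>F. l2inner g (T f) - l2inner g (T (restr F f))) \<longlongrightarrow> 0) (finite_subsets_at_top UNIV)"
    by (rule Lim_null_comparison[OF _ lim2[simplified]])
       (auto intro!: eventually_finite_subsets_at_top_weakI bound)
  then have "((\<lambda>F. l2inner g (T f) - (l2inner g (T f) - l2inner g (T (restr F f)))) \<longlongrightarrow> l2inner g (T f) - 0) (finite_subsets_at_top UNIV)"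
    by (intro tendsto_diff tendsto_const)
  then have "((\<lambda>F. l2inner g (T (restr F f))) \<longlongrightarrow> l2inner g (T f)) (finite_subsets_at_top UNIV)"
    by simp
  then show ?thesis
    unfolding has_sum_def
    by (rule Lim_transform_eventually) (auto intro!: eventually_finite_subsets_at_top_weakI simp: psum)
qed



lemma adjf_is_adj:
  fixes T :: "('a \<Rightarrow> complex) \<Rightarrow> ('b \<Rightarrow> complex)"
  shows "bop T \<Longrightarrow> is_adj T (adjf T)"
  unfolding is_adj_def
proof (intro conjI ballI allI)
  assume T: "bop T"
  then show "bop (adjf T)" by (rule adjf_bop)
  fix f :: "'a \<Rightarrow> complex" and g :: "'b \<Rightarrow> complex" assume "f \<in> l2" "g \<in> l2"
  then show "l2inner g (T f) = l2inner (adjf T g) f"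
    unfolding l2inner_def[of "adjf T g"] using T by (intro infsumI[symmetric] adjf_has_sum)
qed

lemma is_adj_eq_adjf:
  assumes "is_adj T S" shows "S = adjf T"
proof (rule ext)
  fix g
  have bS: "bop S" using assms by (simp add: is_adj_def)
  show "S g = adjf T g"
  proof (cases "g \<in> l2")
    case True
    show ?thesis
    proof (rule ext)
      fix x
      have "l2inner g (T (ket x)) = l2inner (S g) (ket x)"
        using assms True by (simp add: is_adj_def)
      then show "S g x = adjf T g x" using True by (simp add: adjf_def l2inner_ket_right)
    qed
  next
    case False then show ?thesis using bS by (simp add: bop_nonl2 adjf_def)
  qed
qed

lemma adj_eq: "bop T \<Longrightarrow> adj T = adjf T"
  unfolding adj_def
  by (rule the_equality) (auto intro: adjf_is_adj is_adj_eq_adjf)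

lemma adj_unique: "bop T \<Longrightarrow> is_adj T S \<Longrightarrow> adj T = S"
  by (metis adj_eq is_adj_eq_adjf)

lemma adj_bop: "bop T \<Longrightarrow> bop (adj T)"
  by (simp add: adj_eq adjf_bop)

lemma adj_inner: "bop T \<Longrightarrow> f \<in> l2 \<Longrightarrow> g \<in> l2 \<Longrightarrow> l2inner g (T f) = l2inner (adj T g) f"
  using adjf_is_adj[of T] by (simp add: adj_eq is_adj_def)

lemma adj_apply: "bop T \<Longrightarrow> g \<in> l2 \<Longrightarrow> adj T g x = cnj (l2inner g (T (ket x)))"
  by (simp add: adj_eq adjf_def)

lemma bop_ket_eq:
  assumes S1: "bop S1" and S2: "bop S2" and eq: "\<And>x. S1 (ket x) = S2 (ket x)"
  shows "S1 = S2"
proof (rule ext)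
  fix f
  show "S1 f = S2 f"
  proof (cases "f \<in> l2")
    case True
    show ?thesis
    proof (rule ext)
      fix y
      have "S1 f y = l2inner (ket y) (S1 f)" by (simp add: l2inner_ket_left)
      also have "\<dots> = l2inner (adj S1 (ket y)) f" using S1 True by (simp add: adj_inner)
      also have "adj S1 (ket y) = adj S2 (ket y)" using S1 S2 by (simp add: adj_apply eq fun_eq_iff)
      also have "l2inner (adj S2 (ket y)) f = l2inner (ket y) (S2 f)" using S2 True by (simp add: adj_inner)
      also have "\<dots> = S2 f y" by (simp add: l2inner_ket_left)
      finally show "S1 f y = S2 f y" .
    qed
  next
    case False then show ?thesis using S1 S2 by (simp add: bop_nonl2)
  qed
qed

lemma adj_comp:
  fixes S :: "('a \<Rightarrow> complex) \<Rightarrow> ('b \<Rightarrow> complex)" and T :: "('b \<Rightarrow> complex) \<Rightarrow> ('c \<Rightarrow> complex)"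
  assumes S: "bop S" and T: "bop T"
  shows "adj (T \<circ> S) = adj S \<circ> adj T"
proof (rule adj_unique)
  show "bop (T \<circ> S)" using S T by (rule bop_comp)
  show "is_adj (T \<circ> S) (adj S \<circ> adj T)"
    unfolding is_adj_def
  proof (intro conjI ballI)
    show "bop (adj S \<circ> adj T)" using S T by (intro bop_comp adj_bop)
    fix f :: "'a \<Rightarrow> complex" and g :: "'c \<Rightarrow> complex" assume f: "f \<in> l2" and g: "g \<in> l2"
    have "l2inner g ((T \<circ> S) f) = l2inner (adj T g) (S f)" using T f g S by (simp add: adj_inner bop_l2)
    also have "\<dots> = l2inner (adj S (adj T g)) f" using S f by (simp add: adj_inner bop_out adj_bop T)
    finally show "l2inner g ((T \<circ> S) f) = l2inner ((adj S \<circ> adj T) g) f" by simp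
  qed
qed

subsection \<open>Isometries\<close>

lemma isometry_bop: "isometry T \<Longrightarrow> bop T"
  by (simp add: isometry_def)

lemma isometry_norm: "isometry T \<Longrightarrow> f \<in> l2 \<Longrightarrow> l2norm (T f) = l2norm f"
  by (simp add: isometry_def)

lemma isometry_comp: "isometry S \<Longrightarrow> isometry T \<Longrightarrow> isometry (T \<circ> S)"
  unfolding isometry_def by (auto simp: bop_comp bop_l2)

lemma l2inner_expand:
  assumes f: "f \<in> l2" and g: "g \<in> l2"
  shows "l2inner (\<lambda>x. f x + c * g x) (\<lambda>x. f x + c * g x)
    = l2inner f f + c * l2inner f g + cnj (c * l2inner f g) + c * cnj c * l2inner g g"
proof -
  have fg: "(\<lambda>x. f x + c * g x) \<in> l2" using f g by (rule l2_lin)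
  have "l2inner (\<lambda>x. f x + c * g x) (\<lambda>x. f x + c * g x)
     = l2inner f (\<lambda>x. f x + c * g x) + cnj c * l2inner g (\<lambda>x. f x + c * g x)"
    using fg f g by (rule l2inner_lin1)
  also have "\<dots> = l2inner f f + c * l2inner f g + cnj c * (l2inner g f + c * l2inner g g)"
    using f g by (simp add: l2inner_lin2)
  also have "l2inner g f = cnj (l2inner f g)" by (rule l2inner_cnj)
  finally show ?thesis by (simp add: algebra_simps)
qed

lemma l2inner_self_norm: "f \<in> l2 \<Longrightarrow> l2inner f f = complex_of_real ((l2norm f)\<^sup>2)"
  by (simp add: l2inner_self l2norm_sq)

lemma isometry_inner:
  assumes T: "isometry T" and f: "f \<in> l2" and g: "g \<in> l2"
  shows "l2inner (T f) (T g) = l2inner f g"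
proof -
  have bT: "bop T" using T by (rule isometry_bop)
  define z where "z = l2inner (T f) (T g)"
  define w where "w = l2inner f g"
  have key: "c * z + cnj (c * z) = c * w + cnj (c * w)" for c
  proof -
    have fg: "(\<lambda>x. f x + c * g x) \<in> l2" using f g by (rule l2_lin)
    have TT: "T (\<lambda>x. f x + c * g x) = (\<lambda>x. T f x + c * T g x)" using bT f g by (rule bop_lin)
    have nn: "\<And>h. h \<in> l2 \<Longrightarrow> l2inner (T h) (T h) = l2inner h h"
      using T bT by (simp add: l2inner_self_norm bop_l2 isometry_norm)
    have "l2inner (T (\<lambda>x. f x + c * g x)) (T (\<lambda>x. f x + c * g x)) = l2inner (\<lambda>x. f x + c * g x) (\<lambda>x. f x + c * g x)"
      using nn fg by simp
    then have "l2inner (T f) (T f) + c * z + cnj (c * z) + c * cnj c * l2inner (T g) (T g)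
      = l2inner f f + c * w + cnj (c * w) + c * cnj c * l2inner g g"
      unfolding TT z_def w_def using bT f g by (simp add: l2inner_expand bop_l2)
    then show ?thesis using nn f g by simp
  qed
  have 1: "Re z = Re w" using key[of 1] by (simp add: complex_eq_iff)
  have 2: "Im z = Im w" using key[of \<i>] by (simp add: complex_eq_iff)
  show ?thesis using 1 2 by (simp add: z_def w_def complex_eq_iff)
qed

lemma isometry_adj_left:
  assumes T: "isometry T" and f: "f \<in> l2"
  shows "adj T (T f) = f"
proof (rule ext)
  fix x
  have bT: "bop T" using T by (rule isometry_bop)
  have "adj T (T f) x = cnj (l2inner (T f) (T (ket x)))" using bT f by (simp add: adj_apply bop_l2)
  also have "\<dots> = cnj (l2inner f (ket x))" using T f by (simp add: isometry_inner)
  also have "\<dots> = f x" by (simp add: l2inner_ket_right)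
  finally show "adj T (T f) x = f x" .
qed



subsection \<open>Transpose\<close>

lemma cnjop_lin: "cnjop (\<lambda>x. f x + c * g x) = (\<lambda>x. cnjop f x + cnj c * cnjop g x)"
  by (simp add: cnjop_def fun_eq_iff)

lemma nsq_cnjop[simp]: "nsq (cnjop f) = nsq f"
  by (simp add: nsq_def cnjop_def)

lemma l2norm_cnjop[simp]: "l2norm (cnjop f) = l2norm f"
  by (simp add: l2norm_nsq)

definition transf :: "(('a \<Rightarrow> complex) \<Rightarrow> ('a \<Rightarrow> complex)) \<Rightarrow> (('a \<Rightarrow> complex) \<Rightarrow> ('a \<Rightarrow> complex))" where
  "transf b = cnjop \<circ> adj b \<circ> cnjop"

lemma transf_bop:
  fixes b :: "('a \<Rightarrow> complex) \<Rightarrow> ('a \<Rightarrow> complex)"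
  assumes b: "bop b" shows "bop (transf b)"
proof -
  have ab: "bop (adj b)" using b by (rule adj_bop)
  obtain C where C: "C \<ge> 0" "\<forall>f\<in>l2. l2norm (adj b f) \<le> C * l2norm f" using bop_bound[OF ab] by auto
  show ?thesis
  proof (rule bopI[where C = C])
    fix f :: "'a \<Rightarrow> complex" assume f: "f \<in> l2"
    then show "transf b f \<in> l2" using ab by (simp add: transf_def bop_l2)
    show "l2norm (transf b f) \<le> C * l2norm f" using C(2)[rule_format, of "cnjop f"] f by (simp add: transf_def)
  next
    fix f :: "'a \<Rightarrow> complex" assume "f \<notin> l2"
    then have "adj b (cnjop f) = (\<lambda>_. 0)" using ab by (simp add: bop_nonl2)
    then show "transf b f = (\<lambda>_. 0)" by (simp add: transf_def cnjop_def)
  next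
    fix f g :: "'a \<Rightarrow> complex" and c assume f: "f \<in> l2" and g: "g \<in> l2"
    have "adj b (cnjop (\<lambda>x. f x + c * g x)) = (\<lambda>y. adj b (cnjop f) y + cnj c * adj b (cnjop g) y)"
      unfolding cnjop_lin using ab f g by (simp add: bop_lin)
    then show "transf b (\<lambda>x. f x + c * g x) = (\<lambda>y. transf b f y + c * transf b g y)"
      by (simp add: transf_def cnjop_def fun_eq_iff)
  qed
qed

lemma transf_ket: assumes b: "bop b" shows "transf b (ket j) i = b (ket i) j"
proof -
  have k: "cnjop (ket j) = ket j" by (simp add: cnjop_def ket_def fun_eq_iff)
  have "transf b (ket j) i = cnj (adj b (cnjop (ket j)) i)" by (simp add: transf_def cnjop_def)
  also have "\<dots> = cnj (adj b (ket j) i)" by (simp only: k)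
  also have "\<dots> = b (ket i) j" using b by (simp add: adj_apply l2inner_ket_left)
  finally show ?thesis .
qed

lemma transp_char:
  assumes b: "bop b"
  shows "bop (transp b) \<and> (\<forall>i j. transp b (ket j) i = b (ket i) j)"
proof -
  have ex: "bop (transf b) \<and> (\<forall>i j. transf b (ket j) i = b (ket i) j)"
    using b by (simp add: transf_bop transf_ket)
  have un: "c = transf b" if "bop c \<and> (\<forall>i j. c (ket j) i = b (ket i) j)" for c
    using that ex by (intro bop_ket_eq) (auto simp: fun_eq_iff)
  show ?thesis unfolding transp_def
    by (rule theI[of "\<lambda>c. bop c \<and> (\<forall>i j. c (ket j) i = b (ket i) j)" "transf b", OF ex un])
qed

lemma transp_bop: "bop b \<Longrightarrow> bop (transp b)"
  using transp_char by blast

lemma transp_ket: "bop b \<Longrightarrow> transp b (ket j) i = b (ket i) j"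
  using transp_char by blast

lemma transp_transp: "bop b \<Longrightarrow> transp (transp b) = b"
  by (rule bop_ket_eq) (auto simp: transp_bop transp_ket fun_eq_iff)

lemma idop_bop: "bop idop"
proof (rule bopI[where C = 1])
  fix f :: "'a \<Rightarrow> complex"
  show "f \<in> l2 \<Longrightarrow> idop f \<in> l2" by (simp add: idop_def)
  show "f \<in> l2 \<Longrightarrow> l2norm (idop f) \<le> 1 * l2norm f" by (simp add: idop_def)
  show "f \<notin> l2 \<Longrightarrow> idop f = (\<lambda>_. 0)" by (simp add: idop_def)
next
  fix f g :: "'a \<Rightarrow> complex" and c
  assume "f \<in> l2" "g \<in> l2"
  then show "idop (\<lambda>x. f x + c * g x) = (\<lambda>y. idop f y + c * idop g y)"
    by (simp add: idop_def l2_lin)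
qed

lemma idop_l2[simp]: "f \<in> l2 \<Longrightarrow> idop f = f"
  by (simp add: idop_def)

lemma transp_idop: "transp idop = idop"
proof (rule bop_ket_eq)
  show "bop (transp idop)" "bop idop" by (simp_all add: transp_bop idop_bop)
  fix x show "transp idop (ket x) = idop (ket x)"
  proof (rule ext)
    fix y
    have "transp idop (ket x) y = idop (ket y) x" by (rule transp_ket[OF idop_bop])
    also have "\<dots> = ket x y" by (simp only: idop_l2[OF l2_ket]) (simp add: ket_def)
    finally show "transp idop (ket x) y = idop (ket x) y" by simp
  qed
qed



definition tp :: "('a \<Rightarrow> complex) \<Rightarrow> ('b \<Rightarrow> complex) \<Rightarrow> ('a \<times> 'b \<Rightarrow> complex)" where
  "tp x y = (\<lambda>(i, j). x i * y j)"

lemma tp_apply[simp]: "tp x y (i, j) = x i * y j"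
  by (simp add: tp_def)

lemma ket_tp: "ket (i, j) = tp (ket i) (ket j)"
  by (auto simp: tp_def ket_def fun_eq_iff)

lemma tp_l2_nsq:
  assumes x: "x \<in> l2" and y: "y \<in> l2"
  shows "tp x y \<in> l2" "nsq (tp x y) = nsq x * nsq y"
proof -
  define f where "f = (\<lambda>p. (cmod (tp x y p))\<^sup>2)"
  have fe: "f (i, j) = (cmod (x i))\<^sup>2 * (cmod (y j))\<^sup>2" for i j
    by (simp add: f_def norm_mult power_mult_distrib)
  have inner: "((\<lambda>j. f (i, j)) has_sum ((cmod (x i))\<^sup>2 * nsq y)) UNIV" for i
    unfolding fe nsq_def using y unfolding l2_def by (auto intro!: has_sum_cmult_right has_sum_infsum)
  have outer: "((\<lambda>i. (cmod (x i))\<^sup>2 * nsq y) has_sum (nsq x * nsq y)) UNIV"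
    unfolding nsq_def using x unfolding l2_def by (auto intro!: has_sum_cmult_left has_sum_infsum)
  have sm: "f summable_on (Sigma UNIV (\<lambda>_. UNIV))"
    by (rule summable_on_SigmaI[OF inner has_sum_imp_summable[OF outer]]) (simp add: f_def)
  then show "tp x y \<in> l2" by (simp add: l2_def f_def)
  have "(f has_sum (nsq x * nsq y)) (Sigma UNIV (\<lambda>_. UNIV))"
    by (rule has_sum_SigmaI[OF inner outer sm])
  then show "nsq (tp x y) = nsq x * nsq y" unfolding nsq_def f_def by (simp add: infsumI)
qed

lemma tp_l2: "x \<in> l2 \<Longrightarrow> y \<in> l2 \<Longrightarrow> tp x y \<in> l2"
  using tp_l2_nsq by blast

lemma tp_l2norm: assumes "x \<in> l2" "y \<in> l2" shows "l2norm (tp x y) = l2norm x * l2norm y"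
  by (simp add: l2norm_nsq tp_l2_nsq(2)[OF assms] real_sqrt_mult)

lemma tp_inner:
  assumes x: "x \<in> l2" and y: "y \<in> l2" and x': "x' \<in> l2" and y': "y' \<in> l2"
  shows "l2inner (tp x y) (tp x' y') = l2inner x x' * l2inner y y'"
proof -
  define f where "f = (\<lambda>p. cnj (tp x y p) * tp x' y' p)"
  have fe: "f (i, j) = (cnj (x i) * x' i) * (cnj (y j) * y' j)" for i j
    by (simp add: f_def algebra_simps)
  have inner: "((\<lambda>j. f (i, j)) has_sum ((cnj (x i) * x' i) * l2inner y y')) UNIV" for i
    unfolding fe l2inner_def using inner_summable[OF y y'] by (auto intro!: has_sum_cmult_right has_sum_infsum)
  have outer: "((\<lambda>i. (cnj (x i) * x' i) * l2inner y y') has_sum (l2inner x x' * l2inner y y')) UNIV"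
    unfolding l2inner_def[of x] using inner_summable[OF x x'] by (auto intro!: has_sum_cmult_left has_sum_infsum)
  have sm: "f summable_on (Sigma UNIV (\<lambda>_. UNIV))"
    unfolding f_def using inner_summable[OF tp_l2[OF x y] tp_l2[OF x' y']] by simp
  have "(f has_sum (l2inner x x' * l2inner y y')) (Sigma UNIV (\<lambda>_. UNIV))"
    by (rule has_sum_SigmaI[OF inner outer sm])
  then show ?thesis unfolding l2inner_def[of "tp x y"] f_def by (simp add: infsumI)
qed

lemma tp_scale_left: "tp (\<lambda>i. c * x i) y = (\<lambda>p. c * tp x y p)"
  by (auto simp: tp_def fun_eq_iff)

lemma tp_scale_right: "tp x (\<lambda>j. c * y j) = (\<lambda>p. c * tp x y p)"
  by (auto simp: tp_def fun_eq_iff)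

lemma row_l2:
  assumes "\<xi> \<in> l2" shows "(\<lambda>j. \<xi> (i, j)) \<in> l2"
proof -
  have s: "(\<lambda>p. (cmod (\<xi> p))\<^sup>2) summable_on UNIV" using assms by (simp add: l2_def)
  have "(\<lambda>p. (cmod (\<xi> p))\<^sup>2) summable_on (Pair i ` UNIV)"
    by (rule summable_on_subset[OF s]) simp
  then have "((\<lambda>p. (cmod (\<xi> p))\<^sup>2) \<circ> Pair i) summable_on UNIV"
    by (subst summable_on_reindex[symmetric]) (auto simp: inj_on_def)
  then show ?thesis by (simp add: l2_def o_def)
qed

lemma row_decomp:
  fixes \<xi> :: "'a \<times> 'b \<Rightarrow> complex"
  assumes rows: "\<And>i. (\<lambda>j. \<xi> (i, j)) \<in> l2"
    and sm: "(\<lambda>i. nsq (\<lambda>j. \<xi> (i, j))) summable_on UNIV"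
  shows "\<xi> \<in> l2" "nsq \<xi> = (\<Sum>\<^sub>\<infinity>i. nsq (\<lambda>j. \<xi> (i, j)))"
proof -
  define f where "f = (\<lambda>p. (cmod (\<xi> p))\<^sup>2)"
  have inner: "((\<lambda>j. f (i, j)) has_sum nsq (\<lambda>j. \<xi> (i, j))) UNIV" for i
    using rows[of i] unfolding f_def nsq_def l2_def by simp
  have sm2: "f summable_on (Sigma UNIV (\<lambda>_. UNIV))"
    by (rule summable_on_SigmaI[OF inner sm]) (simp add: f_def)
  then show "\<xi> \<in> l2" by (simp add: l2_def f_def)
  have "(f has_sum (\<Sum>\<^sub>\<infinity>i. nsq (\<lambda>j. \<xi> (i, j)))) (Sigma UNIV (\<lambda>_. UNIV))"
    by (rule has_sum_SigmaI[OF inner _ sm2]) (use sm in simp)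
  then show "nsq \<xi> = (\<Sum>\<^sub>\<infinity>i. nsq (\<lambda>j. \<xi> (i, j)))" unfolding nsq_def f_def by (simp add: infsumI)
qed

lemma row_decomp2:
  fixes \<xi> :: "'a \<times> 'b \<Rightarrow> complex"
  assumes "\<xi> \<in> l2"
  shows "(\<lambda>i. nsq (\<lambda>j. \<xi> (i, j))) summable_on UNIV" "nsq \<xi> = (\<Sum>\<^sub>\<infinity>i. nsq (\<lambda>j. \<xi> (i, j)))"
proof -
  define f where "f = (\<lambda>p. (cmod (\<xi> p))\<^sup>2)"
  have sm2: "f summable_on (Sigma UNIV (\<lambda>_. UNIV))" using assms by (simp add: l2_def f_def)
  have inner: "((\<lambda>j. f (i, j)) has_sum nsq (\<lambda>j. \<xi> (i, j))) UNIV" for i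
    using row_l2[OF assms, of i] unfolding f_def nsq_def l2_def by simp
  have "((\<lambda>i. nsq (\<lambda>j. \<xi> (i, j))) has_sum infsum f (Sigma UNIV (\<lambda>_. UNIV))) UNIV"
    by (rule has_sum_SigmaD[OF has_sum_infsum[OF sm2] inner])
  then show "(\<lambda>i. nsq (\<lambda>j. \<xi> (i, j))) summable_on UNIV" "nsq \<xi> = (\<Sum>\<^sub>\<infinity>i. nsq (\<lambda>j. \<xi> (i, j)))"
    by (auto simp: has_sum_imp_summable nsq_def f_def infsumI)
qed

definition swop :: "('a \<times> 'b \<Rightarrow> complex) \<Rightarrow> ('b \<times> 'a \<Rightarrow> complex)" where
  "swop f = (if f \<in> l2 then (\<lambda>(j, i). f (i, j)) else (\<lambda>_. 0))"

lemma swap_bij: "bij_betw prod.swap (UNIV :: ('b \<times> 'a) set) UNIV"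
  by (rule bij_betwI[of _ _ _ prod.swap]) auto

lemma swap_l2: "(\<lambda>(j, i). f (i, j)) \<in> l2 \<longleftrightarrow> f \<in> l2"
  unfolding l2_def using summable_on_reindex_bij_betw[OF swap_bij, of "\<lambda>p. (cmod (f p))\<^sup>2"]
  by (simp add: case_prod_unfold prod.swap_def)

lemma swap_nsq: "nsq (\<lambda>(j, i). f (i, j)) = nsq f"
  unfolding nsq_def using infsum_reindex_bij_betw[OF swap_bij, of "\<lambda>p. (cmod (f p))\<^sup>2"]
  by (simp add: case_prod_unfold prod.swap_def)

lemma swop_bop: "bop swop"
proof (rule bopI[where C = 1])
  fix f :: "'a \<times> 'b \<Rightarrow> complex"
  show "f \<in> l2 \<Longrightarrow> swop f \<in> l2" by (simp add: swop_def swap_l2)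
  show "f \<in> l2 \<Longrightarrow> l2norm (swop f) \<le> 1 * l2norm f" by (simp add: swop_def l2norm_nsq swap_nsq)
  show "f \<notin> l2 \<Longrightarrow> swop f = (\<lambda>_. 0)" by (simp add: swop_def)
next
  fix f g :: "'a \<times> 'b \<Rightarrow> complex" and c
  assume "f \<in> l2" "g \<in> l2"
  then show "swop (\<lambda>x. f x + c * g x) = (\<lambda>y. swop f y + c * swop g y)"
    by (auto simp: swop_def l2_lin fun_eq_iff)
qed

subsection \<open>Tensor with identity\<close>

lemma tensor_right_bop:
  fixes b :: "('b \<Rightarrow> complex) \<Rightarrow> ('d \<Rightarrow> complex)"
  assumes b: "bop b"
  shows "bop (tensor_right b :: ('a \<times> 'b \<Rightarrow> complex) \<Rightarrow> _)"
proof -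
  obtain C where C: "C \<ge> 0" "\<forall>f\<in>l2. l2norm (b f) \<le> C * l2norm f" using bop_bound[OF b] by auto
  have C2: "nsq (b f) \<le> C\<^sup>2 * nsq f" if "f \<in> l2" for f
  proof -
    have "l2norm (b f) \<le> C * l2norm f" using C that by auto
    then have "(l2norm (b f))\<^sup>2 \<le> (C * l2norm f)\<^sup>2" by (intro power_mono) (auto simp: l2norm_nonneg)
    then show ?thesis by (simp add: l2norm_sq power_mult_distrib)
  qed
  show ?thesis
  proof (rule bopI[where C = C])
    fix \<xi> :: "'a \<times> 'b \<Rightarrow> complex" assume xi: "\<xi> \<in> l2"
    have rows: "(\<lambda>l. tensor_right b \<xi> (i, l)) = b (\<lambda>j. \<xi> (i, j))" for i
      using xi by (simp add: tensor_right_def)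
    have rl2: "(\<lambda>l. tensor_right b \<xi> (i, l)) \<in> l2" for i
      unfolding rows using b row_l2[OF xi] by (rule bop_l2)
    have sm0: "(\<lambda>i. nsq (\<lambda>j. \<xi> (i, j))) summable_on UNIV" using row_decomp2[OF xi] by simp
    have sm: "(\<lambda>i. nsq (\<lambda>l. tensor_right b \<xi> (i, l))) summable_on UNIV"
      unfolding rows
      by (rule summable_on_comparison_test[OF summable_on_cmult_right[OF sm0, of "C\<^sup>2"]])
         (auto intro: C2 row_l2[OF xi] nsq_nonneg)
    show "tensor_right b \<xi> \<in> l2" using row_decomp(1)[OF rl2 sm] .
    have "nsq (tensor_right b \<xi>) = (\<Sum>\<^sub>\<infinity>i. nsq (b (\<lambda>j. \<xi> (i, j))))"
      using row_decomp(2)[OF rl2 sm] unfolding rows .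
    also have "\<dots> \<le> (\<Sum>\<^sub>\<infinity>i. C\<^sup>2 * nsq (\<lambda>j. \<xi> (i, j)))"
      by (rule infsum_mono) (use sm[unfolded rows] summable_on_cmult_right[OF sm0] C2 row_l2[OF xi] in auto)
    also have "\<dots> = C\<^sup>2 * nsq \<xi>" by (simp add: infsum_cmult_right' row_decomp2(2)[OF xi])
    finally have "nsq (tensor_right b \<xi>) \<le> C\<^sup>2 * nsq \<xi>" .
    then have "sqrt (nsq (tensor_right b \<xi>)) \<le> sqrt (C\<^sup>2 * nsq \<xi>)" by (rule real_sqrt_le_mono)
    then show "l2norm (tensor_right b \<xi>) \<le> C * l2norm \<xi>"
      using C(1) by (simp add: l2norm_nsq real_sqrt_mult)
  next
    fix \<xi> :: "'a \<times> 'b \<Rightarrow> complex" assume "\<xi> \<notin> l2"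
    then show "tensor_right b \<xi> = (\<lambda>_. 0)" by (simp add: tensor_right_def)
  next
    fix f g :: "'a \<times> 'b \<Rightarrow> complex" and c assume f: "f \<in> l2" and g: "g \<in> l2"
    have "tensor_right b (\<lambda>x. f x + c * g x) (i, l) = tensor_right b f (i, l) + c * tensor_right b g (i, l)" for i l
    proof -
      have "b (\<lambda>j. f (i, j) + c * g (i, j)) = (\<lambda>l. b (\<lambda>j. f (i, j)) l + c * b (\<lambda>j. g (i, j)) l)"
        using b row_l2[OF f] row_l2[OF g] by (rule bop_lin)
      then show ?thesis using f g by (simp add: tensor_right_def l2_lin)
    qed
    then show "tensor_right b (\<lambda>x. f x + c * g x) = (\<lambda>y. tensor_right b f y + c * tensor_right b g y)"
      by auto
  qed
qed

lemma tensor_right_isometry: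
  fixes b :: "('b \<Rightarrow> complex) \<Rightarrow> ('d \<Rightarrow> complex)"
  assumes b: "isometry b"
  shows "isometry (tensor_right b :: ('a \<times> 'b \<Rightarrow> complex) \<Rightarrow> _)"
  unfolding isometry_def
proof (intro conjI ballI)
  have bb: "bop b" using b by (rule isometry_bop)
  show "bop (tensor_right b :: ('a \<times> 'b \<Rightarrow> complex) \<Rightarrow> _)" using bb by (rule tensor_right_bop)
  fix \<xi> :: "'a \<times> 'b \<Rightarrow> complex" assume xi: "\<xi> \<in> l2"
  have rows: "(\<lambda>l. tensor_right b \<xi> (i, l)) = b (\<lambda>j. \<xi> (i, j))" for i
    using xi by (simp add: tensor_right_def)
  have nb: "nsq (b (\<lambda>j. \<xi> (i, j))) = nsq (\<lambda>j. \<xi> (i, j))" for i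
    using isometry_norm[OF b row_l2[OF xi, of i]] by (metis l2norm_sq)
  have tl2: "tensor_right b \<xi> \<in> l2" using bop_l2[OF tensor_right_bop[OF bb] xi] .
  have "nsq (tensor_right b \<xi>) = (\<Sum>\<^sub>\<infinity>i. nsq (b (\<lambda>j. \<xi> (i, j))))"
    using row_decomp2(2)[OF tl2] unfolding rows .
  also have "\<dots> = nsq \<xi>" by (simp add: nb row_decomp2(2)[OF xi])
  finally show "l2norm (tensor_right b \<xi>) = l2norm \<xi>" by (simp add: l2norm_nsq)
qed

lemma tensor_left_swop:
  fixes a :: "('a \<Rightarrow> complex) \<Rightarrow> ('c \<Rightarrow> complex)"
  assumes a: "bop a"
  shows "(tensor_left a :: ('a \<times> 'b \<Rightarrow> complex) \<Rightarrow> _) = swop \<circ> tensor_right a \<circ> swop"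
proof (rule ext)
  fix \<xi> :: "'a \<times> 'b \<Rightarrow> complex"
  show "tensor_left a \<xi> = (swop \<circ> tensor_right a \<circ> swop) \<xi>"
  proof (cases "\<xi> \<in> l2")
    case True
    have s: "swop \<xi> \<in> l2" using True by (simp add: swop_def swap_l2)
    have "tensor_right a (swop \<xi>) \<in> l2" using bop_l2[OF tensor_right_bop[OF a] s] .
    then show ?thesis using True s
      by (auto simp: swop_def tensor_left_def tensor_right_def fun_eq_iff)
  next
    case False
    then have "swop \<xi> = (\<lambda>_. 0)" by (simp add: swop_def)
    then have "tensor_right a (swop \<xi>) = (\<lambda>_. 0)"
      using bop_zero[OF tensor_right_bop[OF a]] by simp
    then show ?thesis using False by (simp add: swop_def tensor_left_def case_prod_unfold)
  qed
qed

lemma tensor_left_bop: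
  fixes a :: "('a \<Rightarrow> complex) \<Rightarrow> ('c \<Rightarrow> complex)"
  assumes a: "bop a"
  shows "bop (tensor_left a :: ('a \<times> 'b \<Rightarrow> complex) \<Rightarrow> _)"
  unfolding tensor_left_swop[OF a]
  by (intro bop_comp swop_bop tensor_right_bop a)

lemma swop_isometry: "isometry swop"
  unfolding isometry_def by (simp add: swop_bop swop_def l2norm_nsq swap_nsq)

lemma tensor_left_isometry:
  fixes a :: "('a \<Rightarrow> complex) \<Rightarrow> ('c \<Rightarrow> complex)"
  assumes a: "isometry a"
  shows "isometry (tensor_left a :: ('a \<times> 'b \<Rightarrow> complex) \<Rightarrow> _)"
  unfolding tensor_left_swop[OF isometry_bop[OF a]]
  by (intro isometry_comp swop_isometry tensor_right_isometry a)

lemma tensor_left_tp: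
  assumes a: "bop a" and x: "x \<in> l2" and y: "y \<in> l2"
  shows "tensor_left a (tp x y) = tp (a x) y"
proof -
  have "a (\<lambda>i. x i * y j) = (\<lambda>k. y j * a x k)" for j
    using bop_scale[OF a x, of "y j"] by (simp add: mult.commute)
  then show ?thesis using tp_l2[OF x y] by (auto simp: tensor_left_def fun_eq_iff)
qed

lemma tensor_right_tp:
  assumes b: "bop b" and x: "x \<in> l2" and y: "y \<in> l2"
  shows "tensor_right b (tp x y) = tp x (b y)"
proof -
  have "b (\<lambda>j. x i * y j) = (\<lambda>k. x i * b y k)" for i
    using bop_scale[OF b y, of "x i"] by simp
  then show ?thesis using tp_l2[OF x y] by (auto simp: tensor_right_def fun_eq_iff)
qed



definition mu :: "'a \<Rightarrow> 'a \<Rightarrow> ('a \<Rightarrow> complex) \<Rightarrow> ('a \<Rightarrow> complex)" where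
  "mu k l f = (if f \<in> l2 then (\<lambda>x. f l * ket k x) else (\<lambda>_. 0))"

lemma single_le_nsq: "f \<in> l2 \<Longrightarrow> (cmod (f l))\<^sup>2 \<le> nsq f"
  unfolding nsq_def l2_def
  using finite_sum_le_infsum[of "\<lambda>x. (cmod (f x))\<^sup>2" UNIV "{l}"] by simp

lemma mu_bop: "bop (mu k l)"
proof (rule bopI[where C = 1])
  fix f :: "'a \<Rightarrow> complex"
  show "f \<in> l2 \<Longrightarrow> mu k l f \<in> l2" by (simp add: mu_def l2_scale)
  show "f \<notin> l2 \<Longrightarrow> mu k l f = (\<lambda>_. 0)" by (simp add: mu_def)
  assume f: "f \<in> l2"
  have "l2norm (mu k l f) = cmod (f l)" using f by (simp add: mu_def l2norm_scale)
  also have "\<dots> = sqrt ((cmod (f l))\<^sup>2)" by simp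
  also have "\<dots> \<le> sqrt (nsq f)" using single_le_nsq[OF f] by (rule real_sqrt_le_mono)
  finally show "l2norm (mu k l f) \<le> 1 * l2norm f" by (simp add: l2norm_nsq)
next
  fix f g :: "'a \<Rightarrow> complex" and c assume "f \<in> l2" "g \<in> l2"
  then show "mu k l (\<lambda>x. f x + c * g x) = (\<lambda>y. mu k l f y + c * mu k l g y)"
    by (simp add: mu_def l2_lin algebra_simps)
qed

lemma mu_ket: "mu k l (ket m) = (if m = l then ket k else (\<lambda>_. 0))"
proof -
  have "mu k l (ket m) = (\<lambda>x. ket m l * ket k x)" by (simp add: mu_def)
  then show ?thesis by (auto simp: ket_def fun_eq_iff)
qed

lemma transp_mu: "transp (mu k l) = mu l k"
proof (rule bop_ket_eq)
  show "bop (transp (mu k l))" "bop (mu l k)" by (simp_all add: transp_bop mu_bop)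
  fix x show "transp (mu k l) (ket x) = mu l k (ket x)"
  proof (rule ext)
    fix y
    have "transp (mu k l) (ket x) y = mu k l (ket y) x" by (rule transp_ket[OF mu_bop])
    also have "mu k l (ket y) x = mu l k (ket x) y" by (simp only: mu_ket) (auto simp: ket_def)
    finally show "transp (mu k l) (ket x) y = mu l k (ket x) y" .
  qed
qed

lemma tp_zero_left[simp]: "tp (\<lambda>_. 0) y = (\<lambda>_. 0)"
  by (auto simp: tp_def fun_eq_iff)

lemma tp_zero_right[simp]: "tp x (\<lambda>_. 0) = (\<lambda>_. 0)"
  by (auto simp: tp_def fun_eq_iff)

definition Jr :: "('b \<Rightarrow> complex) \<Rightarrow> ('a \<Rightarrow> complex) \<Rightarrow> ('a \<times> 'b \<Rightarrow> complex)" where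
  "Jr y = (\<lambda>x. if x \<in> l2 then tp x y else (\<lambda>_. 0))"

definition Jl :: "('a \<Rightarrow> complex) \<Rightarrow> ('b \<Rightarrow> complex) \<Rightarrow> ('a \<times> 'b \<Rightarrow> complex)" where
  "Jl x = (\<lambda>y. if y \<in> l2 then tp x y else (\<lambda>_. 0))"

lemma tp_lin_left: "tp (\<lambda>i. f i + c * g i) y = (\<lambda>p. tp f y p + c * tp g y p)"
  by (auto simp: tp_def fun_eq_iff algebra_simps)

lemma tp_lin_right: "tp x (\<lambda>i. f i + c * g i) = (\<lambda>p. tp x f p + c * tp x g p)"
  by (auto simp: tp_def fun_eq_iff algebra_simps)

lemma Jr_bop: fixes y :: "'b \<Rightarrow> complex" assumes y: "y \<in> l2" shows "bop (Jr y :: ('a \<Rightarrow> complex) \<Rightarrow> _)"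
proof (rule bopI[where C = "l2norm y"])
  fix f :: "'a \<Rightarrow> complex"
  show "f \<in> l2 \<Longrightarrow> Jr y f \<in> l2" using y by (simp add: Jr_def tp_l2)
  show "f \<notin> l2 \<Longrightarrow> Jr y f = (\<lambda>_. 0)" by (simp add: Jr_def)
  show "f \<in> l2 \<Longrightarrow> l2norm (Jr y f) \<le> l2norm y * l2norm f" using y by (simp add: Jr_def tp_l2norm)
next
  fix f g :: "'a \<Rightarrow> complex" and c assume "f \<in> l2" "g \<in> l2"
  then show "Jr y (\<lambda>x. f x + c * g x) = (\<lambda>p. Jr y f p + c * Jr y g p)"
    by (simp add: Jr_def l2_lin tp_lin_left)
qed

lemma Jl_bop: fixes x :: "'a \<Rightarrow> complex" assumes x: "x \<in> l2" shows "bop (Jl x :: ('b \<Rightarrow> complex) \<Rightarrow> _)"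
proof (rule bopI[where C = "l2norm x"])
  fix f :: "'b \<Rightarrow> complex"
  show "f \<in> l2 \<Longrightarrow> Jl x f \<in> l2" using x by (simp add: Jl_def tp_l2)
  show "f \<notin> l2 \<Longrightarrow> Jl x f = (\<lambda>_. 0)" by (simp add: Jl_def)
  show "f \<in> l2 \<Longrightarrow> l2norm (Jl x f) \<le> l2norm x * l2norm f" using x by (simp add: Jl_def tp_l2norm)
next
  fix f g :: "'b \<Rightarrow> complex" and c assume "f \<in> l2" "g \<in> l2"
  then show "Jl x (\<lambda>y. f y + c * g y) = (\<lambda>p. Jl x f p + c * Jl x g p)"
    by (simp add: Jl_def l2_lin tp_lin_right)
qed

lemma adj_Jr_tp:
  assumes y0: "y0 \<in> l2" and x: "x \<in> l2" and y: "y \<in> l2"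
  shows "adj (Jr y0) (tp x y) = (\<lambda>k. l2inner y0 y * x k)"
proof (rule ext)
  fix k
  have "adj (Jr y0) (tp x y) k = cnj (l2inner (tp x y) (Jr y0 (ket k)))"
    using adj_apply[OF Jr_bop[OF y0] tp_l2[OF x y]] .
  also have "\<dots> = cnj (l2inner (tp x y) (tp (ket k) y0))" by (simp add: Jr_def)
  also have "\<dots> = cnj (l2inner x (ket k) * l2inner y y0)" using x y y0 by (simp add: tp_inner)
  also have "\<dots> = l2inner y0 y * x k" by (simp add: l2inner_ket_right l2inner_cnj[of y y0])
  finally show "adj (Jr y0) (tp x y) k = l2inner y0 y * x k" .
qed

lemma adj_Jl_tp:
  assumes x0: "x0 \<in> l2" and x: "x \<in> l2" and y: "y \<in> l2"
  shows "adj (Jl x0) (tp x y) = (\<lambda>k. l2inner x0 x * y k)"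
proof (rule ext)
  fix k
  have "adj (Jl x0) (tp x y) k = cnj (l2inner (tp x y) (Jl x0 (ket k)))"
    using adj_apply[OF Jl_bop[OF x0] tp_l2[OF x y]] .
  also have "\<dots> = cnj (l2inner (tp x y) (tp x0 (ket k)))" by (simp add: Jl_def)
  also have "\<dots> = cnj (l2inner x x0 * l2inner y (ket k))" using x y x0 by (simp add: tp_inner)
  also have "\<dots> = l2inner x0 x * y k" by (simp add: l2inner_ket_right l2inner_cnj[of x x0])
  finally show "adj (Jl x0) (tp x y) k = l2inner x0 x * y k" .
qed



lemma l2inner_scale_left: "l2inner (\<lambda>x. c * f x) g = cnj c * l2inner f g"
  unfolding l2inner_def by (simp add: mult.assoc infsum_cmult_right')

lemma l2inner_scale_right: "l2inner f (\<lambda>x. c * g x) = c * l2inner f g"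
  unfolding l2inner_def by (simp add: algebra_simps infsum_cmult_right'[symmetric])

lemma l2norm_zero_fun: "l2norm (\<lambda>_. 0) = 0"
  by (simp add: l2norm_nsq nsq_def)

lemma split_lemma:
  fixes V :: "('ia \<times> 'ib \<Rightarrow> complex) \<Rightarrow> ('ka \<times> 'kb \<Rightarrow> complex)"
  assumes V: "isometry V"
    and R1: "\<And>a :: ('ia \<Rightarrow> complex) \<Rightarrow> ('ia \<Rightarrow> complex). bop a \<Longrightarrow>
       \<exists>a' :: ('ka \<Rightarrow> complex) \<Rightarrow> ('ka \<Rightarrow> complex). bop a' \<and> (\<forall>\<xi>\<in>l2. V (tensor_left a \<xi>) = tensor_left a' (V \<xi>))"
    and R2: "\<And>b :: ('ib \<Rightarrow> complex) \<Rightarrow> ('ib \<Rightarrow> complex). bop b \<Longrightarrow>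
       \<exists>b' :: ('kb \<Rightarrow> complex) \<Rightarrow> ('kb \<Rightarrow> complex). bop b' \<and> (\<forall>\<xi>\<in>l2. V (tensor_right b \<xi>) = tensor_right b' (V \<xi>))"
    and R3: "\<exists>(\<alpha> :: ('ka \<Rightarrow> complex) \<Rightarrow> ('ka \<Rightarrow> complex)) (\<beta> :: ('kb \<Rightarrow> complex) \<Rightarrow> ('kb \<Rightarrow> complex)).
       bop \<alpha> \<and> bop \<beta> \<and> (\<forall>g. V (adj V g) = tensor_right \<beta> (tensor_left \<alpha> g))"
  shows "\<exists>(VA :: ('ia \<Rightarrow> complex) \<Rightarrow> ('ka \<Rightarrow> complex)) (VB :: ('ib \<Rightarrow> complex) \<Rightarrow> ('kb \<Rightarrow> complex)).
           isometry VA \<and> isometry VB \<and> (\<forall>\<xi>\<in>l2. V \<xi> = optensor VA VB \<xi>)"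
proof -
  have bV: "bop V" using V by (rule isometry_bop)
  define phi where "phi a = (SOME a'. bop a' \<and> (\<forall>\<xi>\<in>l2. V (tensor_left a \<xi>) = tensor_left a' (V \<xi>)))"
    for a :: "('ia \<Rightarrow> complex) \<Rightarrow> ('ia \<Rightarrow> complex)"
  have phi: "bop (phi a) \<and> (\<forall>\<xi>\<in>l2. V (tensor_left a \<xi>) = tensor_left (phi a) (V \<xi>))" if "bop a" for a
    unfolding phi_def by (rule someI_ex[OF R1[OF that]])
  define psi where "psi b = (SOME b'. bop b' \<and> (\<forall>\<xi>\<in>l2. V (tensor_right b \<xi>) = tensor_right b' (V \<xi>)))"
    for b :: "('ib \<Rightarrow> complex) \<Rightarrow> ('ib \<Rightarrow> complex)"
  have psi: "bop (psi b) \<and> (\<forall>\<xi>\<in>l2. V (tensor_right b \<xi>) = tensor_right (psi b) (V \<xi>))" if "bop b" for b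
    unfolding psi_def by (rule someI_ex[OF R2[OF that]])
  have phiB: "bop (phi (mu a b))" for a b using phi[OF mu_bop[of a b]] by (rule conjunct1)
  have psiB: "bop (psi (mu a b))" for a b using psi[OF mu_bop[of a b]] by (rule conjunct1)
  obtain \<alpha> :: "('ka \<Rightarrow> complex) \<Rightarrow> ('ka \<Rightarrow> complex)" and \<beta> :: "('kb \<Rightarrow> complex) \<Rightarrow> ('kb \<Rightarrow> complex)"
    where \<alpha>: "bop \<alpha>" and \<beta>: "bop \<beta>" and VV: "\<And>g. V (adj V g) = tensor_right \<beta> (tensor_left \<alpha> g)"
    using R3 by blast
  define i0 :: 'ia where "i0 = undefined"
  define j0 :: 'ib where "j0 = undefined"
  define \<omega> where "\<omega> = V (ket (i0, j0))"
  have \<omega>l2: "\<omega> \<in> l2" unfolding \<omega>_def using bV by (simp add: bop_l2)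
  have \<omega>n: "l2norm \<omega> = 1" unfolding \<omega>_def using V by (simp add: isometry_norm)

  \<comment> \<open>Step 2: omega is a product vector\<close>
  have Peq: "tensor_left (mu i0 i0) \<circ> tensor_right (mu j0 j0) = mu (i0, j0) (i0, j0)"
  proof (rule bop_ket_eq)
    show "bop (tensor_left (mu i0 i0) \<circ> tensor_right (mu j0 j0))"
      by (intro bop_comp tensor_left_bop tensor_right_bop mu_bop)
    show "bop (mu (i0, j0) (i0, j0))" by (rule mu_bop)
    fix p :: "'ia \<times> 'ib"
    obtain k l where p: "p = (k, l)" by (cases p)
    have "(tensor_left (mu i0 i0) \<circ> tensor_right (mu j0 j0)) (ket (k, l))
        = tp (mu i0 i0 (ket k)) (mu j0 j0 (ket l))"
      unfolding ket_tp by (simp add: tensor_right_tp tensor_left_tp mu_bop bop_out)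
    also have "\<dots> = mu (i0, j0) (i0, j0) (ket (k, l))"
    proof (cases "k = i0 \<and> l = j0")
      case True
      then show ?thesis by (simp add: mu_ket) (simp add: ket_tp)
    next
      case False
      then have "mu i0 i0 (ket k) = (\<lambda>_. 0) \<or> mu j0 j0 (ket l) = (\<lambda>_. 0)" by (auto simp: mu_ket)
      moreover have "(k, l) \<noteq> (i0, j0)" using False by auto
      then have "mu (i0, j0) (i0, j0) (ket (k, l)) = (\<lambda>_. 0)" by (simp only: mu_ket if_False)
      ultimately show ?thesis by auto
    qed
    finally show "(tensor_left (mu i0 i0) \<circ> tensor_right (mu j0 j0)) (ket p) = mu (i0, j0) (i0, j0) (ket p)"
      by (simp add: p)
  qed
  have key: "(\<lambda>z. cnj (\<omega> (k, l)) * \<omega> z) = tp (phi (mu i0 i0) (\<alpha> (ket k))) (psi (mu j0 j0) (\<beta> (ket l)))" for k l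
  proof -
    define h where "h = adj V (ket (k, l))"
    have hl2: "h \<in> l2" unfolding h_def by (rule bop_out[OF adj_bop[OF bV]])
    have "V (tensor_left (mu i0 i0) (tensor_right (mu j0 j0) h)) = V (mu (i0, j0) (i0, j0) h)"
      using fun_cong[OF Peq, of h] by simp
    also have "\<dots> = V (\<lambda>x. h (i0, j0) * ket (i0, j0) x)" using hl2 by (simp add: mu_def)
    also have "\<dots> = (\<lambda>z. h (i0, j0) * \<omega> z)" unfolding \<omega>_def using bV by (simp add: bop_scale)
    also have "h (i0, j0) = cnj (\<omega> (k, l))"
      unfolding h_def \<omega>_def using bV by (simp add: adj_apply l2inner_ket_left)
    finally have lhs: "V (tensor_left (mu i0 i0) (tensor_right (mu j0 j0) h)) = (\<lambda>z. cnj (\<omega> (k, l)) * \<omega> z)" .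
    have pm: "bop (phi (mu i0 i0))" "bop (psi (mu j0 j0))" by (rule phiB, rule psiB)
    have "V (tensor_left (mu i0 i0) (tensor_right (mu j0 j0) h))
        = tensor_left (phi (mu i0 i0)) (V (tensor_right (mu j0 j0) h))"
      by (rule phi[OF mu_bop, THEN conjunct2, rule_format, OF bop_out[OF tensor_right_bop[OF mu_bop]]])
    also have "V (tensor_right (mu j0 j0) h) = tensor_right (psi (mu j0 j0)) (V h)"
      by (rule psi[OF mu_bop, THEN conjunct2, rule_format, OF hl2])
    also have "V h = tp (\<alpha> (ket k)) (\<beta> (ket l))"
      unfolding h_def VV ket_tp using \<alpha> \<beta> by (simp add: tensor_left_tp tensor_right_tp bop_out)
    also have "tensor_left (phi (mu i0 i0)) (tensor_right (psi (mu j0 j0)) (tp (\<alpha> (ket k)) (\<beta> (ket l))))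
        = tp (phi (mu i0 i0) (\<alpha> (ket k))) (psi (mu j0 j0) (\<beta> (ket l)))"
      using pm \<alpha> \<beta> by (simp add: tensor_left_tp tensor_right_tp bop_out)
    finally show ?thesis using lhs by simp
  qed
  have "\<exists>k l. \<omega> (k, l) \<noteq> 0"
  proof (rule ccontr)
    assume a: "\<not> (\<exists>k l. \<omega> (k, l) \<noteq> 0)"
    have "\<omega> = (\<lambda>_. 0)"
    proof (rule ext)
      fix z :: "'ka \<times> 'kb" obtain k l where "z = (k, l)" by (cases z)
      then show "\<omega> z = 0" using a by simp
    qed
    then show False using \<omega>n by (simp add: l2norm_zero_fun)
  qed
  then obtain k l where kl: "\<omega> (k, l) \<noteq> 0" by blast
  define c where "c = cnj (\<omega> (k, l))"
  have c: "c \<noteq> 0" using kl by (simp add: c_def)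
  define u where "u = (\<lambda>i. inverse c * phi (mu i0 i0) (\<alpha> (ket k)) i)"
  define v where "v = psi (mu j0 j0) (\<beta> (ket l))"
  have ul2: "u \<in> l2" unfolding u_def by (rule l2_scale, rule bop_out[OF phiB])
  have vl2: "v \<in> l2" unfolding v_def by (rule bop_out[OF psiB])
  have \<omega>tp: "\<omega> = tp u v"
  proof (rule ext)
    fix z
    have e: "c * \<omega> z = tp (phi (mu i0 i0) (\<alpha> (ket k))) v z"
      using fun_cong[OF key[of k l], of z] unfolding c_def v_def by simp
    have "\<omega> z = inverse c * (c * \<omega> z)" using c by simp
    also have "\<dots> = inverse c * tp (phi (mu i0 i0) (\<alpha> (ket k))) v z" by (simp only: e)
    also have "\<dots> = tp u v z" unfolding u_def tp_scale_left by simp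
    finally show "\<omega> z = tp u v z" .
  qed

  define p where "p i = phi (mu i i0) u" for i
  define q where "q j = psi (mu j j0) v" for j
  have pl2: "p i \<in> l2" for i unfolding p_def by (rule bop_out[OF phiB])
  have ql2: "q j \<in> l2" for j unfolding q_def by (rule bop_out[OF psiB])
  have Vket: "V (ket (i, j)) = tp (p i) (q j)" for i j
  proof -
    have e1: "tensor_right (mu j j0) (ket (i0, j0)) = tp (ket i0) (ket j)"
      unfolding ket_tp by (simp add: tensor_right_tp mu_bop mu_ket)
    have e2: "ket (i, j) = tensor_left (mu i i0) (tensor_right (mu j j0) (ket (i0, j0)))"
      unfolding e1 by (simp add: tensor_left_tp mu_bop mu_ket ket_tp)
    have "V (ket (i, j)) = tensor_left (phi (mu i i0)) (V (tensor_right (mu j j0) (ket (i0, j0))))"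
      unfolding e2 by (rule phi[OF mu_bop, THEN conjunct2, rule_format, OF bop_out[OF tensor_right_bop[OF mu_bop]]])
    also have "V (tensor_right (mu j j0) (ket (i0, j0))) = tensor_right (psi (mu j j0)) \<omega>"
      unfolding \<omega>_def using psi[OF mu_bop] by simp
    also have "tensor_left (phi (mu i i0)) (tensor_right (psi (mu j j0)) \<omega>) = tp (p i) (q j)"
      unfolding \<omega>tp p_def q_def using phi[OF mu_bop] psi[OF mu_bop] ul2 vl2
      by (simp add: tensor_left_tp tensor_right_tp bop_out)
    finally show ?thesis .
  qed

  define np where "np = l2norm (p i0)"
  define nq where "nq = l2norm (q j0)"
  have npq: "np * nq = 1"
    using \<omega>n unfolding \<omega>_def Vket np_def nq_def by (simp add: tp_l2norm pl2 ql2)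
  have np0: "np \<ge> 0" "nq \<ge> 0" by (simp_all add: np_def nq_def l2norm_nonneg)
  have nq0: "nq \<noteq> 0" "np \<noteq> 0" using npq by auto
  define v0 where "v0 = (\<lambda>j. complex_of_real (1 / nq) * q j0 j)"
  define u0 where "u0 = (\<lambda>i. complex_of_real (1 / np) * p i0 i)"
  have v0l2: "v0 \<in> l2" unfolding v0_def by (rule l2_scale, rule ql2)
  have u0l2: "u0 \<in> l2" unfolding u0_def by (rule l2_scale, rule pl2)
  have iv: "l2inner v0 (q j0) = complex_of_real nq"
    unfolding v0_def l2inner_scale_left using ql2[of j0] nq0
    by (simp add: l2inner_self_norm nq_def power2_eq_square)
  have iu: "l2inner u0 (p i0) = complex_of_real np"
    unfolding u0_def l2inner_scale_left using pl2[of i0] nq0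
    by (simp add: l2inner_self_norm np_def power2_eq_square)
  define VA where "VA = adj (Jr v0) \<circ> V \<circ> Jr (ket j0)"
  define VB where "VB = adj (Jl u0) \<circ> V \<circ> Jl (ket i0)"
  have bVA: "bop VA" unfolding VA_def
    by (intro bop_comp Jr_bop adj_bop bV v0l2 l2_ket)
  have bVB: "bop VB" unfolding VB_def
    by (intro bop_comp Jl_bop adj_bop bV u0l2 l2_ket)
  have VAk: "VA (ket i) = (\<lambda>k. complex_of_real nq * p i k)" for i
  proof -
    have "VA (ket i) = adj (Jr v0) (V (tp (ket i) (ket j0)))" by (simp add: VA_def Jr_def)
    also have "\<dots> = adj (Jr v0) (tp (p i) (q j0))" by (simp add: Vket ket_tp[symmetric])
    also have "\<dots> = (\<lambda>k. complex_of_real nq * p i k)" by (simp add: adj_Jr_tp v0l2 pl2 ql2 iv)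
    finally show ?thesis .
  qed
  have VBk: "VB (ket j) = (\<lambda>l. complex_of_real np * q j l)" for j
  proof -
    have "VB (ket j) = adj (Jl u0) (V (tp (ket i0) (ket j)))" by (simp add: VB_def Jl_def)
    also have "\<dots> = adj (Jl u0) (tp (p i0) (q j))" by (simp add: Vket ket_tp[symmetric])
    also have "\<dots> = (\<lambda>l. complex_of_real np * q j l)" by (simp add: adj_Jl_tp u0l2 pl2 ql2 iu)
    finally show ?thesis .
  qed
  have bT: "bop (optensor VA VB)" unfolding optensor_def
    by (intro bop_comp tensor_left_bop tensor_right_bop bVA bVB)
  have Veq: "V = optensor VA VB"
  proof (rule bop_ket_eq[OF bV bT])
    fix x :: "'ia \<times> 'ib"
    obtain i j where x: "x = (i, j)" by (cases x)
    have "optensor VA VB (ket (i, j)) = tp (VA (ket i)) (VB (ket j))"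
      unfolding optensor_def ket_tp using bVA bVB by (simp add: tensor_left_tp tensor_right_tp bop_out)
    also have "\<dots> = (\<lambda>z. complex_of_real (nq * np) * tp (p i) (q j) z)"
      unfolding VAk VBk by (simp add: tp_scale_left tp_scale_right mult.assoc)
    also have "\<dots> = V (ket (i, j))" using npq by (simp add: Vket mult.commute)
    finally show "V (ket x) = optensor VA VB (ket x)" by (simp add: x)
  qed
  have Vtp: "V (tp x y) = tp (VA x) (VB y)" if "x \<in> l2" "y \<in> l2" for x y
    unfolding Veq optensor_def using that bVA bVB by (simp add: tensor_left_tp tensor_right_tp bop_out)
  have nA: "l2norm (VA (ket i0)) = 1"
    unfolding VAk l2norm_scale using np0 npq by (simp add: np_def mult.commute)
  have nB: "l2norm (VB (ket j0)) = 1"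
    unfolding VBk l2norm_scale using np0 npq by (simp add: nq_def)
  have isoA: "isometry VA"
    unfolding isometry_def
  proof (intro conjI ballI bVA)
    fix x :: "'ia \<Rightarrow> complex" assume x: "x \<in> l2"
    have "l2norm x = l2norm (tp x (ket j0))" using x by (simp add: tp_l2norm)
    also have "\<dots> = l2norm (V (tp x (ket j0)))" using V x by (simp add: isometry_norm tp_l2)
    also have "\<dots> = l2norm (VA x)" using x bVA bVB nB by (simp add: Vtp tp_l2norm bop_out)
    finally show "l2norm (VA x) = l2norm x" by simp
  qed
  have isoB: "isometry VB"
    unfolding isometry_def
  proof (intro conjI ballI bVB)
    fix y :: "'ib \<Rightarrow> complex" assume y: "y \<in> l2"
    have "l2norm y = l2norm (tp (ket i0) y)" using y by (simp add: tp_l2norm)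
    also have "\<dots> = l2norm (V (tp (ket i0) y))" using V y by (simp add: isometry_norm tp_l2)
    also have "\<dots> = l2norm (VB y)" using y bVA bVB nA by (simp add: Vtp tp_l2norm bop_out)
    finally show "l2norm (VB y) = l2norm y" by simp
  qed
  show ?thesis using isoA isoB Veq by blast
qed



lemma tensor_right_idop: "\<xi> \<in> l2 \<Longrightarrow> tensor_right idop \<xi> = \<xi>"
  by (auto simp: tensor_right_def row_l2 fun_eq_iff)

theorem mainTheorem1:
  fixes V :: "('ia \<times> 'ib \<Rightarrow> complex) \<Rightarrow> ('ka \<times> 'kb \<Rightarrow> complex)"
    and LA :: "(('ia \<Rightarrow> complex) \<Rightarrow> ('ia \<Rightarrow> complex)) \<Rightarrow> (('l \<Rightarrow> complex) \<Rightarrow> ('l \<Rightarrow> complex))"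
    and LB :: "(('kb \<Rightarrow> complex) \<Rightarrow> ('kb \<Rightarrow> complex)) \<Rightarrow> (('l \<Rightarrow> complex) \<Rightarrow> ('l \<Rightarrow> complex))"
    and MA :: "(('ka \<Rightarrow> complex) \<Rightarrow> ('ka \<Rightarrow> complex)) \<Rightarrow> (('m \<Rightarrow> complex) \<Rightarrow> ('m \<Rightarrow> complex))"
    and MB :: "(('ib \<Rightarrow> complex) \<Rightarrow> ('ib \<Rightarrow> complex)) \<Rightarrow> (('m \<Rightarrow> complex) \<Rightarrow> ('m \<Rightarrow> complex))"
    and T11 :: "('ia \<times> 'ib \<Rightarrow> complex) \<Rightarrow> ('m \<Rightarrow> complex)"
    and T22 :: "('l \<Rightarrow> complex) \<Rightarrow> ('ka \<times> 'kb \<Rightarrow> complex)"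
    and T12 :: "('ia \<times> 'ib \<Rightarrow> complex) \<Rightarrow> ('l \<Rightarrow> complex)"
    and T21 :: "('m \<Rightarrow> complex) \<Rightarrow> ('ka \<times> 'kb \<Rightarrow> complex)"
  assumes L_sys: "bip_sys LA LB"
    and Lt_sys: "bip_sys MA MB"
    and T11: "isometry T11" "A_local stdA stdB MA MB T11"
    and T22: "isometry T22" "A_local LA LB stdA stdB T22"
    and T12: "isometry T12" "B_local stdA stdB LA LB T12"
    and T21: "isometry T21" "B_local MA MB stdA stdB T21"
    and V1: "V = T22 \<circ> T12"
    and V2: "V = T21 \<circ> T11"
  shows "\<exists>(VA :: ('ia \<Rightarrow> complex) \<Rightarrow> ('ka \<Rightarrow> complex)) (VB :: ('ib \<Rightarrow> complex) \<Rightarrow> ('kb \<Rightarrow> complex)).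
           isometry VA \<and> isometry VB \<and> (\<forall>\<xi>\<in>l2. V \<xi> = optensor VA VB \<xi>)"
proof (rule split_lemma)
  have b11: "bop T11" and b22: "bop T22" and b12: "bop T12" and b21: "bop T21"
    using T11 T22 T12 T21 by (simp_all add: isometry_bop)
  have T22b: "\<And>b \<xi>. bop b \<Longrightarrow> \<xi> \<in> l2 \<Longrightarrow> T22 (LB b \<xi>) = stdB b (T22 \<xi>)"
    and T22a: "\<And>a. bop a \<Longrightarrow> \<exists>a'. bop a' \<and> T22 \<circ> LA a \<circ> adj T22 = stdA a'"
    using T22(2) unfolding A_local_def by blast+
  have T11b: "\<And>b \<xi>. bop b \<Longrightarrow> \<xi> \<in> l2 \<Longrightarrow> T11 (stdB b \<xi>) = MB b (T11 \<xi>)"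
    using T11(2) unfolding A_local_def by blast
  have T12a: "\<And>a \<xi>. bop a \<Longrightarrow> \<xi> \<in> l2 \<Longrightarrow> T12 (stdA a \<xi>) = LA a (T12 \<xi>)"
    and T12b: "\<And>b. bop b \<Longrightarrow> \<exists>b'. bop b' \<and> T12 \<circ> stdB b \<circ> adj T12 = LB b'"
    using T12(2) unfolding B_local_def by blast+
  have T21b: "\<And>b. bop b \<Longrightarrow> \<exists>b'. bop b' \<and> T21 \<circ> MB b \<circ> adj T21 = stdB b'"
    using T21(2) unfolding B_local_def by blast
  have LAid: "LA idop = idop" using L_sys unfolding bip_sys_def star_rep_def by blast

  show "isometry V" unfolding V1 using T12(1) T22(1) by (rule isometry_comp)

  show "\<exists>a'. bop a' \<and> (\<forall>\<xi>\<in>l2. V (tensor_left a \<xi>) = tensor_left a' (V \<xi>))" if a: "bop a" for a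
  proof -
    obtain a' where a': "bop a'" and e: "T22 \<circ> LA a \<circ> adj T22 = stdA a'" using T22a[OF a] by blast
    have "V (tensor_left a \<xi>) = tensor_left a' (V \<xi>)" if xi: "\<xi> \<in> l2" for \<xi>
    proof -
      have t: "T12 \<xi> \<in> l2" using b12 xi by (rule bop_l2)
      have "V (tensor_left a \<xi>) = T22 (LA a (T12 \<xi>))" unfolding V1 using T12a[OF a xi] by (simp add: stdA_def)
      also have "\<dots> = T22 (LA a (adj T22 (T22 (T12 \<xi>))))" using isometry_adj_left[OF T22(1) t] by simp
      also have "\<dots> = stdA a' (V \<xi>)" using fun_cong[OF e, of "T22 (T12 \<xi>)"] by (simp add: V1)
      finally show ?thesis by (simp add: stdA_def)
    qed
    then show ?thesis using a' by blast
  qed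

  show "\<exists>b'. bop b' \<and> (\<forall>\<xi>\<in>l2. V (tensor_right b \<xi>) = tensor_right b' (V \<xi>))" if b: "bop b" for b
  proof -
    define c where "c = transp b"
    have c: "bop c" unfolding c_def using b by (rule transp_bop)
    have sc: "stdB c = tensor_right b" unfolding stdB_def c_def using b by (simp add: transp_transp)
    obtain c' where c': "bop c'" and e: "T21 \<circ> MB c \<circ> adj T21 = stdB c'" using T21b[OF c] by blast
    have "V (tensor_right b \<xi>) = tensor_right (transp c') (V \<xi>)" if xi: "\<xi> \<in> l2" for \<xi>
    proof -
      have t: "T11 \<xi> \<in> l2" using b11 xi by (rule bop_l2)
      have "V (tensor_right b \<xi>) = T21 (MB c (T11 \<xi>))" unfolding V2 sc[symmetric] using T11b[OF c xi] by simp
      also have "\<dots> = T21 (MB c (adj T21 (T21 (T11 \<xi>))))" using isometry_adj_left[OF T21(1) t] by simp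
      also have "\<dots> = stdB c' (V \<xi>)" using fun_cong[OF e, of "T21 (T11 \<xi>)"] by (simp add: V2)
      finally show ?thesis by (simp add: stdB_def)
    qed
    then show ?thesis using c' transp_bop by blast
  qed

  show "\<exists>\<alpha> \<beta>. bop \<alpha> \<and> bop \<beta> \<and> (\<forall>g. V (adj V g) = tensor_right \<beta> (tensor_left \<alpha> g))"
  proof -
    obtain a0 where a0: "bop a0" and ea: "T22 \<circ> LA idop \<circ> adj T22 = stdA a0" using T22a[OF idop_bop] by blast
    obtain b0 where b0: "bop b0" and eb: "T12 \<circ> stdB idop \<circ> adj T12 = LB b0" using T12b[OF idop_bop] by blast
    have "V (adj V g) = tensor_right (transp b0) (tensor_left a0 g)" for g
    proof -
      define h where "h = adj T22 g"
      have hl2: "h \<in> l2" unfolding h_def by (rule bop_out[OF adj_bop[OF b22]])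
      have h2: "adj T12 h \<in> l2" by (rule bop_out[OF adj_bop[OF b12]])
      have "V (adj V g) = T22 (T12 (adj T12 h))" unfolding V1 h_def using b12 b22 by (simp add: adj_comp)
      also have "T12 (adj T12 h) = LB b0 h"
        using fun_cong[OF eb, of h] h2 by (simp add: stdB_def transp_idop tensor_right_idop)
      also have "T22 (LB b0 h) = stdB b0 (T22 h)" by (rule T22b[OF b0 hl2])
      also have "T22 h = stdA a0 g"
        using fun_cong[OF ea, of g] hl2 by (simp add: LAid h_def)
      finally show ?thesis by (simp add: stdA_def stdB_def)
    qed
    then show ?thesis using a0 b0 transp_bop by blast
  qed
qed


end
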